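(* For the discrete-time one-item Grover search problem with $N>1$ and time step $\Delta\in(0,1]$, the minimum query time $T$ (an integer multiple of $\Delta$) for which there exists a protocol with $P_{win}=1$ is $$T=\Delta\left\lceil\frac{\arccos\frac{1}{\sqrt N}}{\arcsin\frac{2\sin(\pi\Delta/2)\sqrt{N-1}}{N}}\right\rceil.$$
   Context: Oracle-problem framework (discrete case). We are given finite-dimensional Hilbert spaces $\mathcal{A},\mathcal{M},\mathcal{M}'$, a pure state $|\psi_0\rangle\in\mathcal{A}$, a unitary $O$ on $\mathcal{A}\otimes\mathcal{M}$, a time step $\Delta>0$, and positive operators $\{\Pi_x\}$ on $\mathcal{A}\otimes\mathcal{M}'$. A protocol with query time $T$ (a multiple of $\Delta$) and success probability $P_{win}$ consists of positive operators $\rho(t)$ on $\mathcal{A}$ and $\tilde\rho(t)$ on $\mathcal{A}\otimes\mathcal{M}$ for $t\in\{0,\Delta,\dots,T\}$, and $\tilde\rho'$ on $\mathcal{A}\otimes\mathcal{M}'$, such that: - $\rho(0)=|\psi_0\rangle\langle\psi_0|$; - $\mathrm{Tr}_\mathcal{M}\tilde\rho(t)=\rho(t)$; - $\rho(t+\Delta)=\mathrm{Tr}_\mathcal{M}[O\tilde\rho(t)O^{-1}]$ for $t\le T-\Delta$; - $\mathrm{Tr}_{\mathcal{M}'}\tilde\rho'=\rho(T)$; - $P_{win}\le\mathrm{Tr}[\Pi_x\tilde\rho']$ for all $x$. One-item Grover search. Take $\mathcal{A}=\mathrm{span}\{|j\rangle:j\in\{1,\dots,N\}\}$ and $\mathcal{M}=\mathcal{M}'=\mathrm{span}\{|j\rangle:j\in\{0,\dots,N\}\}$.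 Set $|\psi_0\rangle=N^{-1/2}\sum_{j=1}^N|j\rangle$ and $O=O_\Delta=I-(1-e^{-i\pi\Delta})\sum_{j=1}^N|j\rangle\langle j|_\mathcal{A}\otimes|j\rangle\langle j|_\mathcal{M}$. The verification operators are $\Pi_j=N|j\rangle\langle j|_\mathcal{A}\otimes|j\rangle\langle j|_{\mathcal{M}'}$ for $j=1,\dots,N$. *)

theory Defs
  imports Complex_Main
begin

text \<open>Operators on a finite-dimensional Hilbert space with orthonormal basis indexed
  by a finite set I are represented by their matrix entries.\<close>
type_synonym 'i op = "'i \<Rightarrow> 'i \<Rightarrow> complex"

definition psd_on :: "'i set \<Rightarrow> 'i op \<Rightarrow> bool" where
  "psd_on I X \<longleftrightarrow> (\<forall>v :: 'i \<Rightarrow> complex.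
     Im (\<Sum>i\<in>I. \<Sum>j\<in>I. cnj (v i) * X i j * v j) = 0 \<and>
     Re (\<Sum>i\<in>I. \<Sum>j\<in>I. cnj (v i) * X i j * v j) \<ge> 0)"

definition ptrace :: "'b set \<Rightarrow> ('a \<times> 'b) op \<Rightarrow> 'a op" where
  "ptrace B X = (\<lambda>a a'. \<Sum>b\<in>B. X (a, b) (a', b))"

text \<open>Conjugation U X U^{-1} for a unitary U, where U^{-1} = U^* (adjoint).\<close>
definition conj_by :: "'i set \<Rightarrow> 'i op \<Rightarrow> 'i op \<Rightarrow> 'i op" where
  "conj_by S U X = (\<lambda>x y. \<Sum>u\<in>S. \<Sum>w\<in>S. U x u * X u w * cnj (U y w))"

definition op_comp :: "'i set \<Rightarrow> 'i op \<Rightarrow> 'i op \<Rightarrow> 'i op" where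
  "op_comp S P X = (\<lambda>x y. \<Sum>z\<in>S. P x z * X z y)"

definition op_trace :: "'i set \<Rightarrow> 'i op \<Rightarrow> complex" where
  "op_trace S X = (\<Sum>x\<in>S. X x x)"

text \<open>General discrete oracle-problem protocol with K time steps (query time T = K * Delta);
  time t = k * Delta is indexed by k in {0..K}.  rho k acts on A, rhot k on A (x) M,
  rho' on A (x) M'.\<close>
definition is_protocol ::
  "'a set \<Rightarrow> 'm set \<Rightarrow> 'n set \<Rightarrow> ('a \<Rightarrow> complex) \<Rightarrow> ('a \<times> 'm) op \<Rightarrow> ('a \<times> 'n) op set
   \<Rightarrow> nat \<Rightarrow> real \<Rightarrow> (nat \<Rightarrow> 'a op) \<Rightarrow> (nat \<Rightarrow> ('a \<times> 'm) op) \<Rightarrow> ('a \<times> 'n) op \<Rightarrow> bool" where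
  "is_protocol A M M' psi0 U Pis K Pwin \<rho> \<rho>t \<rho>' \<longleftrightarrow>
     (\<forall>k\<le>K. psd_on A (\<rho> k) \<and> psd_on (A \<times> M) (\<rho>t k)) \<and> psd_on (A \<times> M') \<rho>' \<and>
     (\<forall>a\<in>A. \<forall>b\<in>A. \<rho> 0 a b = psi0 a * cnj (psi0 b)) \<and>
     (\<forall>k\<le>K. \<forall>a\<in>A. \<forall>b\<in>A. ptrace M (\<rho>t k) a b = \<rho> k a b) \<and>
     (\<forall>k<K. \<forall>a\<in>A. \<forall>b\<in>A. ptrace M (conj_by (A \<times> M) U (\<rho>t k)) a b = \<rho> (Suc k) a b) \<and>
     (\<forall>a\<in>A. \<forall>b\<in>A. ptrace M' \<rho>' a b = \<rho> K a b) \<and>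
     (\<forall>P\<in>Pis. Pwin \<le> Re (op_trace (A \<times> M') (op_comp (A \<times> M') P \<rho>')))"

definition grover_psi0 :: "nat \<Rightarrow> nat \<Rightarrow> complex" where
  "grover_psi0 N j = complex_of_real (1 / sqrt (real N))"

definition grover_oracle :: "nat \<Rightarrow> real \<Rightarrow> (nat \<times> nat) op" where
  "grover_oracle N \<Delta> = (\<lambda>(i, m) (i', m').
     (if (i, m) = (i', m') then 1 else 0)
     - (if i = m \<and> i' = m' \<and> i = i' \<and> i \<in> {1..N}
        then 1 - exp (- \<i> * complex_of_real (pi * \<Delta>)) else 0))"

definition grover_Pi :: "nat \<Rightarrow> nat \<Rightarrow> (nat \<times> nat) op" where
  "grover_Pi N j = (\<lambda>x y. if x = (j, j) \<and> y = (j, j) then of_nat N else 0)"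

definition grover_protocol ::
  "nat \<Rightarrow> real \<Rightarrow> nat \<Rightarrow> real \<Rightarrow> (nat \<Rightarrow> nat op) \<Rightarrow> (nat \<Rightarrow> (nat \<times> nat) op) \<Rightarrow> (nat \<times> nat) op \<Rightarrow> bool" where
  "grover_protocol N \<Delta> K Pwin \<rho> \<rho>t \<rho>' \<longleftrightarrow>
     is_protocol {1..N} {0..N} {0..N} (grover_psi0 N) (grover_oracle N \<Delta>)
       (grover_Pi N ` {1..N}) K Pwin \<rho> \<rho>t \<rho>'"

end

theory Submission
  imports Defs
begin

definition qf :: "'i set \<Rightarrow> 'i op \<Rightarrow> ('i \<Rightarrow> complex) \<Rightarrow> complex" where
  "qf S X v = (\<Sum>i\<in>S. \<Sum>j\<in>S. cnj (v i) * X i j * v j)"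

lemma psd_qf: assumes "psd_on S X" shows "Im (qf S X v) = 0" "Re (qf S X v) \<ge> 0"
  using assms unfolding psd_on_def qf_def by auto

lemma sum_delta_r: "finite S \<Longrightarrow> x \<in> S \<Longrightarrow> (\<Sum>j\<in>S. g j * (if j = x then r else 0)) = g x * (r::complex)"
proof -
  assume a: "finite S" "x \<in> S"
  have "(\<Sum>j\<in>S. g j * (if j = x then r else 0)) = (\<Sum>j\<in>S. if j = x then g x * r else 0)"
    by (rule sum.cong) auto
  then show ?thesis using a by simp
qed

lemma sum_delta_l: "finite S \<Longrightarrow> x \<in> S \<Longrightarrow> (\<Sum>j\<in>S. cnj (if j = x then r else 0) * g j) = cnj r * (g x::complex)"
proof -
  assume a: "finite S" "x \<in> S"
  have "(\<Sum>j\<in>S. cnj (if j = x then r else 0) * g j) = (\<Sum>j\<in>S. if j = x then cnj r * g x else 0)"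
    by (rule sum.cong) auto
  then show ?thesis using a by simp
qed

lemma qf_two:
  assumes "finite S" "x \<in> S" "y \<in> S"
  shows "qf S X (\<lambda>i. (if i = x then r else 0) + (if i = y then t else 0)) =
     cnj r * X x x * r + cnj r * X x y * t + cnj t * X y x * r + cnj t * X y y * t"
proof -
  let ?v = "\<lambda>i. (if i = x then r else 0) + (if i = y then t else 0)"
  have "qf S X ?v = (\<Sum>i\<in>S. cnj (?v i) * (\<Sum>j\<in>S. X i j * ?v j))"
    unfolding qf_def by (simp add: sum_distrib_left mult.assoc)
  also have "\<dots> = (\<Sum>i\<in>S. cnj (?v i) * (X i x * r + X i y * t))"
    using sum_delta_r[OF assms(1,2)] sum_delta_r[OF assms(1,3)]
    by (simp add: distrib_left sum.distrib)
  also have "\<dots> = cnj r * (X x x * r + X x y * t) + cnj t * (X y x * r + X y y * t)"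
    using sum_delta_l[OF assms(1,2)] sum_delta_l[OF assms(1,3)]
    by (simp only: complex_cnj_add distrib_right sum.distrib)
  finally show ?thesis by (simp add: algebra_simps)
qed

lemma qf_one:
  assumes "finite S" "x \<in> S"
  shows "qf S X (\<lambda>i. if i = x then 1 else 0) = X x x"
  using qf_two[OF assms assms(2), of X 1 0] by simp

lemma psd_diag: assumes "psd_on S X" "finite S" "x \<in> S"
  shows "Im (X x x) = 0" "Re (X x x) \<ge> 0"
  using psd_qf[OF assms(1), of "\<lambda>i. if i = x then 1 else 0"] qf_one[OF assms(2,3), of X] by auto


lemma psd_zero_row:
  assumes "psd_on S X" "finite S" "x \<in> S" "y \<in> S" "Re (X x x) = 0"
  shows "X x y = 0 \<and> X y x = 0"
proof -
  have xx: "X x x = 0" using psd_diag[OF assms(1-3)] assms(5) by (simp add: complex_eq_iff)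
  define w1 where "w1 = X x y"
  define w2 where "w2 = X y x"
  have key: "Im (cnj r * w1 + w2 * r + X y y) = 0 \<and> Re (cnj r * w1 + w2 * r + X y y) \<ge> 0" for r
    using psd_qf[OF assms(1), of "\<lambda>i. (if i = x then r else 0) + (if i = y then 1 else 0)"]
      qf_two[OF assms(2,3,4), of X r 1] xx unfolding w1_def w2_def by simp
  have Iyy: "Im (X y y) = 0" using key[of 0] by simp
  define d where "d = w2 - cnj w1"
  have "Im (cnj (\<i> * cnj d) * w1 + w2 * (\<i> * cnj d) + X y y) = 0" using key by blast
  hence "(Re w2 - Re w1)^2 + (Im w2 + Im w1)^2 = 0" using Iyy unfolding d_def
    by (simp add: algebra_simps power2_eq_square)
  hence e1: "Re w2 = Re w1" "Im w2 = - Im w1"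
    by (simp_all add: sum_power2_eq_zero_iff)
  define q where "q = (Re w1)^2 + (Im w1)^2"
  define R where "R = Re (X y y)"
  have tq: "4 * t * q \<le> R" if "t \<ge> 0" for t
  proof -
    have "Re (cnj (- (of_real t) * 2 * w1) * w1 + w2 * (- (of_real t) * 2 * w1) + X y y) \<ge> 0"
      using key by blast
    thus ?thesis using e1 unfolding q_def R_def by (simp add: algebra_simps power2_eq_square)
  qed
  have "q = 0"
  proof (rule ccontr)
    assume "q \<noteq> 0"
    hence qp: "q > 0" unfolding q_def by (simp add: add_pos_nonneg sum_power2_gt_zero_iff)
    have Rn: "R \<ge> 0" using psd_diag[OF assms(1,2,4)] unfolding R_def by simp
    have "4 * ((R + 1) / (4 * q)) * q \<le> R" using tq[of "(R+1)/(4*q)"] qp Rn by simp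
    thus False using qp by simp
  qed
  hence "(Re w1)^2 + (Im w1)^2 = 0" unfolding q_def .
  hence "w1 = 0" by (simp add: complex_eq_iff sum_power2_eq_zero_iff)
  moreover have "w2 = 0" using e1 \<open>w1 = 0\<close> by (simp add: complex_eq_iff)
  ultimately show ?thesis unfolding w1_def w2_def by simp
qed


lemma qf_block:
  assumes "finite A" "finite M" "m \<in> M"
  shows "qf (A \<times> M) X (\<lambda>(a, m'). if m' = m then v a else 0) = qf A (\<lambda>a b. X (a, m) (b, m)) v"
proof -
  let ?w = "\<lambda>(a, m'). if m' = m then v a else 0"
  have inner: "(\<Sum>y\<in>A \<times> M. X x y * ?w y) = (\<Sum>b\<in>A. X x (b, m) * v b)" for x
  proof -
    have "(\<Sum>y\<in>A \<times> M. X x y * ?w y) = (\<Sum>b\<in>A. \<Sum>m'\<in>M. X x (b, m') * (if m' = m then v b else 0))"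
      by (simp only: sum.cartesian_product) (rule sum.cong, auto)
    also have "\<dots> = (\<Sum>b\<in>A. X x (b, m) * v b)"
      by (rule sum.cong) (use assms in \<open>simp_all add: if_distrib cong: if_cong\<close>)
    finally show ?thesis .
  qed
  have "qf (A \<times> M) X ?w = (\<Sum>x\<in>A \<times> M. cnj (?w x) * (\<Sum>y\<in>A \<times> M. X x y * ?w y))"
    unfolding qf_def by (simp add: sum_distrib_left mult.assoc)
  also have "\<dots> = (\<Sum>x\<in>A \<times> M. cnj (?w x) * (\<Sum>b\<in>A. X x (b, m) * v b))"
    using inner by simp
  also have "\<dots> = (\<Sum>a\<in>A. \<Sum>m'\<in>M. cnj (if m' = m then v a else 0) * (\<Sum>b\<in>A. X (a, m') (b, m) * v b))"
    by (simp only: sum.cartesian_product) (rule sum.cong, auto)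
  also have "\<dots> = (\<Sum>a\<in>A. cnj (v a) * (\<Sum>b\<in>A. X (a, m) (b, m) * v b))"
    using sum_delta_l[OF assms(2,3)] by simp
  also have "\<dots> = qf A (\<lambda>a b. X (a, m) (b, m)) v"
    unfolding qf_def by (simp add: sum_distrib_left mult.assoc)
  finally show ?thesis .
qed

lemma psd_block:
  assumes "psd_on (A \<times> M) X" "finite A" "finite M" "m \<in> M"
  shows "psd_on A (\<lambda>a b. X (a, m) (b, m))"
  unfolding psd_on_def
proof
  fix v
  show "Im (\<Sum>i\<in>A. \<Sum>j\<in>A. cnj (v i) * X (i, m) (j, m) * v j) = 0 \<and>
        0 \<le> Re (\<Sum>i\<in>A. \<Sum>j\<in>A. cnj (v i) * X (i, m) (j, m) * v j)"
    using psd_qf[OF assms(1), of "\<lambda>(a, m'). if m' = m then v a else 0"] qf_block[OF assms(2-4), of X v]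
    unfolding qf_def by simp
qed

lemma qf_ptrace: "qf A (ptrace M X) v = (\<Sum>m\<in>M. qf A (\<lambda>a b. X (a, m) (b, m)) v)"
  unfolding qf_def ptrace_def
  by (simp add: sum_distrib_left sum_distrib_right sum.swap[of _ M] mult.assoc)

lemma psd_ptrace:
  assumes "psd_on (A \<times> M) X" "finite A" "finite M"
  shows "psd_on A (ptrace M X)"
  unfolding psd_on_def
proof
  fix v
  have "\<forall>m\<in>M. Im (qf A (\<lambda>a b. X (a, m) (b, m)) v) = 0 \<and> Re (qf A (\<lambda>a b. X (a, m) (b, m)) v) \<ge> 0"
    using psd_qf[OF psd_block[OF assms]] by blast
  hence "Im (qf A (ptrace M X) v) = 0 \<and> Re (qf A (ptrace M X) v) \<ge> 0"
    unfolding qf_ptrace by (simp add: Im_sum Re_sum sum_nonneg)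
  thus "Im (\<Sum>i\<in>A. \<Sum>j\<in>A. cnj (v i) * ptrace M X i j * v j) = 0 \<and>
        0 \<le> Re (\<Sum>i\<in>A. \<Sum>j\<in>A. cnj (v i) * ptrace M X i j * v j)" unfolding qf_def .
qed

definition outer :: "('i \<Rightarrow> complex) \<Rightarrow> 'i op" where
  "outer f = (\<lambda>x y. f x * cnj (f y))"

lemma psd_outer: "psd_on S (outer f)"
  unfolding psd_on_def
proof
  fix v :: "'a \<Rightarrow> complex"
  define w where "w = (\<Sum>i\<in>S. cnj (v i) * f i)"
  have "(\<Sum>i\<in>S. \<Sum>j\<in>S. cnj (v i) * outer f i j * v j) = w * cnj w"
    unfolding w_def outer_def
    by (simp add: sum_distrib_left sum_distrib_right mult_ac) (subst sum.swap, simp add: mult_ac)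
  then show "Im (\<Sum>i\<in>S. \<Sum>j\<in>S. cnj (v i) * outer f i j * v j) = 0 \<and>
        0 \<le> Re (\<Sum>i\<in>S. \<Sum>j\<in>S. cnj (v i) * outer f i j * v j)" by (simp add: algebra_simps)
qed

lemma conj_by_diag:
  assumes "finite S" "\<forall>x\<in>S. \<forall>u\<in>S. x \<noteq> u \<longrightarrow> U x u = 0" "x \<in> S" "y \<in> S"
  shows "conj_by S U X x y = U x x * X x y * cnj (U y y)"
proof -
  have "conj_by S U X x y = (\<Sum>u\<in>S. if u = x then (\<Sum>w\<in>S. U x u * X u w * cnj (U y w)) else 0)"
    unfolding conj_by_def by (rule sum.cong) (use assms in auto)
  also have "\<dots> = (\<Sum>w\<in>S. U x x * X x w * cnj (U y w))" using assms by simp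
  also have "\<dots> = (\<Sum>w\<in>S. if w = y then U x x * X x w * cnj (U y w) else 0)"
    by (rule sum.cong) (use assms in auto)
  also have "\<dots> = U x x * X x y * cnj (U y y)" using assms by simp
  finally show ?thesis .
qed

lemma psd_coef:
  assumes "psd_on S X" "finite I"
  shows "Re (\<Sum>i\<in>S. \<Sum>j\<in>S. X i j * (\<Sum>c\<in>I. cnj (v c i) * v c j)) \<ge> 0"
proof -
  have "(\<Sum>i\<in>S. \<Sum>j\<in>S. X i j * (\<Sum>c\<in>I. cnj (v c i) * v c j)) = (\<Sum>c\<in>I. qf S X (v c))"
    unfolding qf_def by (simp add: sum_distrib_left sum.swap[of _ I] mult_ac)
  also have "Re \<dots> \<ge> 0" using psd_qf[OF assms(1)] by (simp add: Re_sum sum_nonneg)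
  finally show ?thesis .
qed


lemma cnj_mult_self: "cnj z * z = complex_of_real ((cmod z)^2)"
  by (metis complex_norm_square mult.commute)

lemma var_sum:
  fixes N m a b :: nat
  assumes "a \<in> {1..N}" "b \<in> {1..N}" "m \<in> {1..N}" "N \<ge> 2"
  defines "u \<equiv> \<lambda>a::nat. if a \<noteq> m then 1 / (real N - 1) else 0"
  shows "(\<Sum>c\<in>{1..N}. if c = m then 0 else ((if a = c then 1 else 0) - u a) * ((if b = c then 1 else 0) - u b))
     = (if a \<noteq> m \<and> b \<noteq> m then (if a = b then 1 else 0) - 1 / (real N - 1) else 0)"
proof -
  let ?S = "{1..N} - {m}"
  have fin: "finite ?S" by simp
  have cS: "card ?S = N - 1" using assms(3) by simp
  have "(\<Sum>c\<in>{1..N}. if c = m then 0 else ((if a = c then 1 else 0) - u a) * ((if b = c then 1 else 0) - u b))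
      = (\<Sum>c\<in>?S. ((if a = c then 1 else 0) - u a) * ((if b = c then 1 else 0) - u b))"
    by (simp add: sum.If_cases Diff_eq)
  also have "\<dots> = (\<Sum>c\<in>?S. (if a = c \<and> b = c then 1 else 0)) - u b * (\<Sum>c\<in>?S. (if a = c then 1 else 0))
        - u a * (\<Sum>c\<in>?S. (if b = c then 1 else 0)) + (\<Sum>c\<in>?S. u a * u b)"
  proof -
    have "(\<Sum>c\<in>?S. ((if a = c then 1 else 0) - u a) * ((if b = c then 1 else 0) - u b))
      = (\<Sum>c\<in>?S. (if a = c \<and> b = c then 1 else 0) - u b * (if a = c then 1 else 0)
          - u a * (if b = c then 1 else 0) + u a * u b)"
      by (rule sum.cong) (auto simp: algebra_simps)
    thus ?thesis by (simp only: sum.distrib sum_subtractf sum_distrib_left[symmetric])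
  qed
  also have "\<dots> = (if a = b \<and> a \<in> ?S then 1 else 0) - u b * (if a \<in> ?S then 1 else 0)
        - u a * (if b \<in> ?S then 1 else 0) + real (N - 1) * u a * u b"
  proof -
    have "(\<Sum>c\<in>?S. (if a = c \<and> b = c then 1 else 0::real)) = (\<Sum>c\<in>?S. if a = c then (if a = b then 1 else 0) else 0)"
      by (rule sum.cong) auto
    also have "\<dots> = (if a = b \<and> a \<in> ?S then 1 else 0)" using fin by (simp add: sum.delta)
    finally show ?thesis using cS by (simp add: sum.delta)
  qed
  also have "\<dots> = (if a \<noteq> m \<and> b \<noteq> m then (if a = b then 1 else 0) - 1 / (real N - 1) else 0)"
  proof -
    define n where "n = real N - 1"
    have n: "real (N - 1) = n" "n > 0" using assms(4) by (auto simp: of_nat_diff n_def)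
    have uu: "u x = (if x \<noteq> m then 1 / n else 0)" for x unfolding u_def n_def by simp
    show ?thesis unfolding n(1) uu n_def[symmetric] using assms(1-3) n(2)
      by (cases "a = m"; cases "b = m"; cases "a = b") (simp_all add: field_simps)
  qed
  finally show ?thesis .
qed


lemma block_coef:
  fixes N m a b :: nat and lam :: complex and c0 c1 :: real
  assumes N2: "N \<ge> 2" and m: "m \<in> {1..N}" and ab: "a \<in> {1..N}" "b \<in> {1..N}"
   and lam: "cmod lam = 1" and c0: "c0 \<le> 0"
   and alpha: "(1 - c1) / N - c0 > 0"
   and ident: "(cmod (lam - c1))^2 = (real N)^2 * ((1 - c1) / N - c0) * ((1 - c1) / N - c0 / (real N - 1))"
  defines "g \<equiv> \<lambda>a. if a = m then lam else 1"
  defines "z1 \<equiv> complex_of_real (sqrt ((1 - c1) / N - c0))"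
  defines "z2 \<equiv> (lam - of_real c1) / (of_nat N * z1)"
  defines "u \<equiv> \<lambda>a::nat. if a \<noteq> m then 1 / (real N - 1) else 0"
  defines "v \<equiv> \<lambda>c a. if c = 0 then (if a = m then z1 else z2) else if c = m then 0
             else complex_of_real (sqrt (- c0) * ((if a = c then 1 else 0) - u a))"
  shows "g a * cnj (g b) / of_nat N - of_real c1 / of_nat N - of_real c0 * (if a = b then 1 else 0)
       = (\<Sum>c\<in>{0..N}. cnj (v c a) * v c b)"
proof -
  define \<alpha> where "\<alpha> = (1 - c1) / N - c0"
  have Npos: "real N > 0" "real N - 1 > 0" using N2 by auto
  have z1r: "z1 = of_real (sqrt \<alpha>)" unfolding z1_def \<alpha>_def ..
  have z1n: "z1 \<noteq> 0" using alpha unfolding z1r \<alpha>_def by simp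
  have cz1: "cnj z1 * z1 = of_real \<alpha>" unfolding z1r using alpha \<alpha>_def
    by (simp flip: of_real_mult)
  have "{0..N} = insert 0 {1..N}" by auto
  hence split: "(\<Sum>c\<in>{0..N}. cnj (v c a) * v c b) = cnj (v 0 a) * v 0 b + (\<Sum>c\<in>{1..N}. cnj (v c a) * v c b)"
    by simp
  have rest: "(\<Sum>c\<in>{1..N}. cnj (v c a) * v c b) =
     of_real (- c0 * (if a \<noteq> m \<and> b \<noteq> m then (if a = b then 1 else 0) - 1 / (real N - 1) else 0))"
  proof -
    have "(\<Sum>c\<in>{1..N}. cnj (v c a) * v c b) = (\<Sum>c\<in>{1..N}. of_real (- c0 * (if c = m then 0 else
        ((if a = c then 1 else 0) - u a) * ((if b = c then 1 else 0) - u b))))"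
    proof (rule sum.cong)
      fix c assume "c \<in> {1..N}"
      hence "c \<noteq> 0" by auto
      moreover have "sqrt (- c0) * sqrt (- c0) = - c0" using c0 by simp
      moreover have "complex_of_real (real N * real N) = of_nat N * of_nat N" by simp
      ultimately show "cnj (v c a) * v c b = of_real (- c0 * (if c = m then 0 else
        ((if a = c then 1 else 0) - u a) * ((if b = c then 1 else 0) - u b)))"
        unfolding v_def by (simp flip: of_real_mult add: algebra_simps)
    qed simp
    also have "\<dots> = of_real (- c0 * (\<Sum>c\<in>{1..N}. (if c = m then 0 else
        ((if a = c then 1 else 0) - u a) * ((if b = c then 1 else 0) - u b))))"
      by (simp add: sum_distrib_left)
    also have "\<dots> = of_real (- c0 * (if a \<noteq> m \<and> b \<noteq> m then (if a = b then 1 else 0) - 1 / (real N - 1) else 0))"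
      using var_sum[OF ab m N2] unfolding u_def by simp
    finally show ?thesis .
  qed
  have z2sq: "cnj z2 * z2 = of_real ((1 - c1) / N - c0 / (real N - 1))"
  proof -
    have "cnj z2 * z2 = (cnj (lam - of_real c1) * (lam - of_real c1)) / (cnj (of_nat N * z1) * (of_nat N * z1))"
      unfolding z2_def by (simp add: field_simps)
    also have "\<dots> = of_real ((cmod (lam - c1))^2) / of_real ((cmod (of_nat N * z1))^2)"
      unfolding cnj_mult_self ..
    also have "(cmod (of_nat N * z1))^2 = (real N)^2 * \<alpha>"
      unfolding z1r norm_mult using alpha \<alpha>_def by (simp add: power_mult_distrib)
    finally have "cnj z2 * z2 = of_real ((cmod (lam - c1))^2 / ((real N)^2 * \<alpha>))" by simp
    also have "(cmod (lam - c1))^2 / ((real N)^2 * \<alpha>) = (1 - c1) / N - c0 / (real N - 1)"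
    proof -
      have ne: "(real N)^2 * \<alpha> \<noteq> 0" using alpha Npos \<alpha>_def by simp
      show ?thesis unfolding ident \<alpha>_def[symmetric]
        by (rule nonzero_mult_div_cancel_left[OF ne])
    qed
    finally show ?thesis .
  qed
  show ?thesis
  proof (cases "a = m")
    case am: True
    show ?thesis
    proof (cases "b = m")
      case True
      have "lam * cnj lam = 1" using complex_norm_square[of lam] lam by simp
      show ?thesis unfolding split rest using am True cz1 lam \<open>lam * cnj lam = 1\<close>
        by (simp add: v_def g_def \<alpha>_def cnj_mult_self diff_divide_distrib)
    next
      case False
      have hN: "(of_nat N :: complex) \<noteq> 0" using Npos by simp
      have hz: "complex_of_real (sqrt \<alpha>) \<noteq> 0" using z1n z1r by simp
      show ?thesis unfolding split rest using am False hN hz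
        by (simp add: v_def g_def z2_def z1r field_simps)
    qed
  next
    case an: False
    show ?thesis
    proof (cases "b = m")
      case True
      have hN: "(of_nat N :: complex) \<noteq> 0" using Npos by simp
      have hz: "complex_of_real (sqrt \<alpha>) \<noteq> 0" using z1n z1r by simp
      show ?thesis unfolding split rest using an True hN hz
        by (simp add: v_def g_def z2_def z1r field_simps)
    next
      case False
      show ?thesis unfolding split rest using an False z2sq Npos
        by (simp add: v_def g_def field_simps) 
    qed
  qed
qed


lemma expand_W:
  fixes Y :: "nat op" and g :: "nat \<Rightarrow> complex" and A :: "nat set"
  assumes "finite A"
  shows "(\<Sum>a\<in>A. \<Sum>b\<in>A. Y a b * (g a * cnj (g b) / of_nat N - of_real c1 / of_nat N - of_real c0 * (if a = b then 1 else 0)))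
    = (\<Sum>a\<in>A. \<Sum>b\<in>A. g a * Y a b * cnj (g b)) / of_nat N - of_real c1 * (\<Sum>a\<in>A. \<Sum>b\<in>A. Y a b) / of_nat N
      - of_real c0 * (\<Sum>a\<in>A. Y a a)"
proof -
  have "(\<Sum>a\<in>A. \<Sum>b\<in>A. Y a b * (g a * cnj (g b) / of_nat N - of_real c1 / of_nat N - of_real c0 * (if a = b then 1 else 0)))
    = (\<Sum>a\<in>A. (\<Sum>b\<in>A. g a * Y a b * cnj (g b)) / of_nat N - of_real c1 * (\<Sum>b\<in>A. Y a b) / of_nat N
        - of_real c0 * Y a a)"
  proof (rule sum.cong)
    fix a assume a: "a \<in> A"
    have "(\<Sum>b\<in>A. Y a b * (g a * cnj (g b) / of_nat N - of_real c1 / of_nat N - of_real c0 * (if a = b then 1 else 0)))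
      = (\<Sum>b\<in>A. g a * Y a b * cnj (g b) / of_nat N - of_real c1 * Y a b / of_nat N - (if b = a then of_real c0 * Y a b else 0))"
      by (rule sum.cong) (auto simp: algebra_simps)
    also have "\<dots> = (\<Sum>b\<in>A. g a * Y a b * cnj (g b)) / of_nat N - of_real c1 * (\<Sum>b\<in>A. Y a b) / of_nat N
        - of_real c0 * Y a a"
      using a assms by (simp add: sum_subtractf sum_divide_distrib sum_distrib_left)
    finally show "(\<Sum>b\<in>A. Y a b * (g a * cnj (g b) / of_nat N - of_real c1 / of_nat N - of_real c0 * (if a = b then 1 else 0)))
      = (\<Sum>b\<in>A. g a * Y a b * cnj (g b)) / of_nat N - of_real c1 * (\<Sum>b\<in>A. Y a b) / of_nat N
        - of_real c0 * Y a a" .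
  qed simp
  also have "\<dots> = (\<Sum>a\<in>A. \<Sum>b\<in>A. g a * Y a b * cnj (g b)) / of_nat N - of_real c1 * (\<Sum>a\<in>A. \<Sum>b\<in>A. Y a b) / of_nat N
      - of_real c0 * (\<Sum>a\<in>A. Y a a)"
    by (simp add: sum_subtractf sum_divide_distrib sum_distrib_left)
  finally show ?thesis .
qed

lemma block_ineq:
  fixes N m :: nat and lam :: complex and c0 c1 :: real and Y :: "nat op"
  assumes psd: "psd_on {1..N} Y" and N2: "N \<ge> 2" and m: "m \<in> {1..N}"
   and lam: "cmod lam = 1" and c0: "c0 \<le> 0"
   and alpha: "(1 - c1) / N - c0 > 0"
   and ident: "(cmod (lam - c1))^2 = (real N)^2 * ((1 - c1) / N - c0) * ((1 - c1) / N - c0 / (real N - 1))"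
  shows "c1 * Re (\<Sum>a\<in>{1..N}. \<Sum>b\<in>{1..N}. Y a b) / N + c0 * Re (\<Sum>a\<in>{1..N}. Y a a)
    \<le> Re (\<Sum>a\<in>{1..N}. \<Sum>b\<in>{1..N}. (if a = m then lam else 1) * Y a b * cnj (if b = m then lam else 1)) / N"
proof -
  define g where "g \<equiv> \<lambda>a::nat. if a = m then lam else 1"
  define z1 where "z1 \<equiv> complex_of_real (sqrt ((1 - c1) / N - c0))"
  define z2 where "z2 \<equiv> (lam - of_real c1) / (of_nat N * z1)"
  define u where "u \<equiv> \<lambda>a::nat. if a \<noteq> m then 1 / (real N - 1) else 0"
  define v where "v \<equiv> \<lambda>c a. if c = 0 then (if a = m then z1 else z2) else if c = m then 0
             else complex_of_real (sqrt (- c0) * ((if a = c then 1 else 0) - u a))"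
  have "Re (\<Sum>a\<in>{1..N}. \<Sum>b\<in>{1..N}. Y a b * (\<Sum>c\<in>{0..N}. cnj (v c a) * v c b)) \<ge> 0"
    by (rule psd_coef[OF psd]) simp
  also have "(\<Sum>a\<in>{1..N}. \<Sum>b\<in>{1..N}. Y a b * (\<Sum>c\<in>{0..N}. cnj (v c a) * v c b))
    = (\<Sum>a\<in>{1..N}. \<Sum>b\<in>{1..N}. Y a b * (g a * cnj (g b) / of_nat N - of_real c1 / of_nat N - of_real c0 * (if a = b then 1 else 0)))"
    using block_coef[OF N2 m _ _ lam c0 alpha ident] unfolding g_def z1_def z2_def u_def v_def
    by (intro sum.cong refl) simp
  also have "\<dots> = (\<Sum>a\<in>{1..N}. \<Sum>b\<in>{1..N}. g a * Y a b * cnj (g b)) / of_nat N - of_real c1 * (\<Sum>a\<in>{1..N}. \<Sum>b\<in>{1..N}. Y a b) / of_nat N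
      - of_real c0 * (\<Sum>a\<in>{1..N}. Y a a)"
    by (rule expand_W) simp
  finally show ?thesis unfolding g_def by (simp add: Re_divide_of_nat)
qed

lemma block_ineq0:
  fixes N :: nat and c0 c1 :: real and Y :: "nat op"
  assumes psd: "psd_on {1..N} Y" and N2: "N \<ge> 2" and c0: "c0 \<le> 0" and c01: "1 - c1 - c0 \<ge> 0"
  shows "c1 * Re (\<Sum>a\<in>{1..N}. \<Sum>b\<in>{1..N}. Y a b) / N + c0 * Re (\<Sum>a\<in>{1..N}. Y a a)
    \<le> Re (\<Sum>a\<in>{1..N}. \<Sum>b\<in>{1..N}. Y a b) / N"
proof -
  define v where "v \<equiv> \<lambda>(c::nat) (a::nat). if c = 0 then complex_of_real (sqrt (1 - c1 - c0) / sqrt N)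
     else complex_of_real (sqrt (- c0) * ((if a = c then 1 else 0) - 1 / N))"
  have Npos: "real N > 0" using N2 by simp
  have coef: "(\<Sum>c\<in>{0..N}. cnj (v c a) * v c b) = 1 / of_nat N - of_real c1 / of_nat N - of_real c0 * (if a = b then 1 else 0)"
    if ab: "a \<in> {1..N}" "b \<in> {1..N}" for a b
  proof -
    have "{0..N} = insert 0 {1..N}" by auto
    hence split: "(\<Sum>c\<in>{0..N}. cnj (v c a) * v c b) = cnj (v 0 a) * v 0 b + (\<Sum>c\<in>{1..N}. cnj (v c a) * v c b)"
      by simp
    have v0: "cnj (v 0 a) * v 0 b = of_real ((1 - c1 - c0) / N)"
      unfolding v_def using c01 Npos by (simp flip: of_real_mult add: real_sqrt_divide[symmetric]) 
    have "(\<Sum>c\<in>{1..N}. cnj (v c a) * v c b) = (\<Sum>c\<in>{1..N}. of_real (- c0 * (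
        (if a = c \<and> b = c then 1 else 0) - (if a = c then 1 / N else 0) - (if b = c then 1 / N else 0) + 1 / N / N)))"
    proof (rule sum.cong)
      fix c assume "c \<in> {1..N}"
      moreover have "sqrt (- c0) * sqrt (- c0) = - c0" using c0 by simp
      moreover have "complex_of_real (real N * real N) = of_nat N * of_nat N" by simp
      ultimately show "cnj (v c a) * v c b = of_real (- c0 * (
        (if a = c \<and> b = c then 1 else 0) - (if a = c then 1 / N else 0) - (if b = c then 1 / N else 0) + 1 / N / N))"
        unfolding v_def by (auto simp flip: of_real_mult simp add: algebra_simps of_real_of_nat_eq)
    qed simp
    also have "\<dots> = of_real (\<Sum>c\<in>{1..N}. - c0 * (
        (if a = c \<and> b = c then 1 else 0) - (if a = c then 1 / N else 0) - (if b = c then 1 / N else 0) + 1 / N / N))"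
      by (simp only: of_real_sum)
    also have "(\<Sum>c\<in>{1..N}. - c0 * (
        (if a = c \<and> b = c then 1 else 0) - (if a = c then 1 / N else 0) - (if b = c then 1 / N else 0) + 1 / N / N))
        = - c0 * ((if a = b then 1 else 0) - 1 / N)"
    proof -
      have e: "(\<Sum>c\<in>{1..N}. (if a = c \<and> b = c then 1 else 0::real)) = (if a = b then 1 else 0)"
      proof -
        have "(\<Sum>c\<in>{1..N}. (if a = c \<and> b = c then 1 else 0::real)) = (\<Sum>c\<in>{1..N}. if a = c then (if a = b then 1 else 0) else 0)"
          by (rule sum.cong) auto
        thus ?thesis using ab by simp
      qed
      have "(\<Sum>c\<in>{1..N}. - c0 * (
        (if a = c \<and> b = c then 1 else 0) - (if a = c then 1 / N else 0) - (if b = c then 1 / N else 0) + 1 / N / N))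
        = - c0 * ((\<Sum>c\<in>{1..N}. (if a = c \<and> b = c then 1 else 0)) - (\<Sum>c\<in>{1..N}. (if a = c then 1 / N else 0))
         - (\<Sum>c\<in>{1..N}. (if b = c then 1 / N else 0)) + (\<Sum>c\<in>{1..N}. 1 / N / N))"
        by (simp only: sum_distrib_left[symmetric] sum.distrib sum_subtractf)
      also have "\<dots> = - c0 * ((if a = b then 1 else 0) - 1 / N - 1 / N + N * (1 / N / N))"
        unfolding e using ab by simp
      also have "\<dots> = - c0 * ((if a = b then 1 else 0) - 1 / N)" using Npos by (simp add: field_simps)
      finally show ?thesis .
    qed
    finally have "(\<Sum>c\<in>{1..N}. cnj (v c a) * v c b) = of_real (- c0 * ((if a = b then 1 else 0) - 1 / N))" .
    thus ?thesis unfolding split v0 using Npos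
      by (cases "a = b") (simp_all add: field_simps)
  qed
  have "Re (\<Sum>a\<in>{1..N}. \<Sum>b\<in>{1..N}. Y a b * (\<Sum>c\<in>{0..N}. cnj (v c a) * v c b)) \<ge> 0"
    by (rule psd_coef[OF psd]) simp
  also have "(\<Sum>a\<in>{1..N}. \<Sum>b\<in>{1..N}. Y a b * (\<Sum>c\<in>{0..N}. cnj (v c a) * v c b))
    = (\<Sum>a\<in>{1..N}. \<Sum>b\<in>{1..N}. Y a b * ((\<lambda>_. 1) a * cnj ((\<lambda>_. 1) b) / of_nat N - of_real c1 / of_nat N - of_real c0 * (if a = b then 1 else 0)))"
    using coef by (intro sum.cong refl) simp
  also have "\<dots> = (\<Sum>a\<in>{1..N}. \<Sum>b\<in>{1..N}. (\<lambda>_. 1) a * Y a b * cnj ((\<lambda>_. 1) b)) / of_nat N - of_real c1 * (\<Sum>a\<in>{1..N}. \<Sum>b\<in>{1..N}. Y a b) / of_nat N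
      - of_real c0 * (\<Sum>a\<in>{1..N}. Y a a)"
    by (rule expand_W) simp
  finally show ?thesis by (simp add: Re_divide_of_nat)
qed

lemma alg_ident:
  fixes S C sb cb sp cp c0 c1 n s :: real
  assumes S: "S > 0" and C: "C > 0" and SC: "S^2 + C^2 = 1" and bb: "sb^2 + cb^2 = 1"
    and sp: "sp = S * cb + C * sb" and cp: "cp = C * cb - S * sb"
    and c1: "c1 = sp * cp / (S * C)" and c0: "c0 = - cp * sb / S"
    and n: "n > 1" and sbn: "sb^2 * n^2 = 4 * s^2 * (n - 1)"
  shows "1 - c1 - c0 = sb * sp / C"
    and "c1 * C^2 + c0 = cp^2"
    and "(1 - c1)^2 + 4 * s^2 * c1 = n^2 * ((1 - c1) / n - c0) * ((1 - c1) / n - c0 / (n - 1))"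
proof -
  have c1c0: "c1 + c0 = cp * cb / C"
  proof -
    have "c1 + c0 = cp * (sp - C * sb) / (S * C)" unfolding c1 c0 using S C by (simp add: field_simps)
    also have "sp - C * sb = S * cb" unfolding sp by simp
    finally show ?thesis using S C by (simp add: field_simps)
  qed
  show e1: "1 - c1 - c0 = sb * sp / C"
  proof -
    have "1 - c1 - c0 = (C - cp * cb) / C" using c1c0 C by (simp add: field_simps)
    also have "C - cp * cb = sb * sp"
    proof -
      have "C - cp * cb = C * (1 - cb^2) + S * sb * cb" unfolding cp by (simp add: algebra_simps power2_eq_square)
      also have "1 - cb^2 = sb^2" using bb by simp
      finally show ?thesis unfolding sp by (simp add: algebra_simps power2_eq_square)
    qed
    finally show ?thesis .
  qed
  show "c1 * C^2 + c0 = cp^2"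
  proof -
    have "c1 * C^2 + c0 = cp * (sp * C - sb) / S" unfolding c1 c0 using S C by (simp add: field_simps power2_eq_square)
    also have "sp * C - sb = S * cp"
    proof -
      have "sp * C - sb = S * cb * C - sb * (1 - C^2)" unfolding sp by (simp add: algebra_simps power2_eq_square)
      also have "1 - C^2 = S^2" using SC by simp
      finally show ?thesis unfolding cp by (simp add: algebra_simps power2_eq_square)
    qed
    finally show ?thesis using S by (simp add: power2_eq_square)
  qed
  have k: "c0 * (c0 + c1 - 1) = c1 * sb^2"
  proof -
    have "c0 * (c0 + c1 - 1) = (- cp * sb / S) * (- (sb * sp / C))" using e1 c0 by (simp add: algebra_simps)
    also have "\<dots> = c1 * sb^2" unfolding c1 using S C by (simp add: field_simps power2_eq_square)
    finally show ?thesis .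
  qed
  have "n^2 * ((1 - c1) / n - c0) * ((1 - c1) / n - c0 / (n - 1)) = (1 - c1)^2 + n^2 * (c0 * (c0 + c1 - 1)) / (n - 1)"
    using n by (simp add: field_simps power2_eq_square)
  also have "\<dots> = (1 - c1)^2 + c1 * (sb^2 * n^2) / (n - 1)" unfolding k by (simp add: algebra_simps)
  also have "\<dots> = (1 - c1)^2 + 4 * s^2 * c1" unfolding sbn using n by (simp add: field_simps)
  finally show "(1 - c1)^2 + 4 * s^2 * c1 = n^2 * ((1 - c1) / n - c0) * ((1 - c1) / n - c0 / (n - 1))" by simp
qed

definition lamD :: "real \<Rightarrow> complex" where "lamD \<Delta> = exp (- \<i> * complex_of_real (pi * \<Delta>))"

lemma lamD_cmod: "cmod (lamD \<Delta>) = 1"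
  unfolding lamD_def by (simp add: norm_exp_eq_Re)

lemma lamD_Re: "Re (lamD \<Delta>) = cos (pi * \<Delta>)" and lamD_Im: "Im (lamD \<Delta>) = - sin (pi * \<Delta>)"
  unfolding lamD_def by (simp_all add: Re_exp Im_exp)

lemma lamD_dist: "(cmod (lamD \<Delta> - of_real c))^2 = (1 - c)^2 + 4 * (sin (pi * \<Delta> / 2))^2 * c"
proof -
  have "(cmod (lamD \<Delta> - of_real c))^2 = (cos (pi * \<Delta>) - c)^2 + (sin (pi * \<Delta>))^2"
    by (simp add: cmod_power2 lamD_Re lamD_Im)
  also have "cos (pi * \<Delta>) = 1 - 2 * (sin (pi * \<Delta> / 2))^2"
    using cos_double_sin[of "pi * \<Delta> / 2"] by simp
  also have "(sin (pi * \<Delta>))^2 = 1 - (cos (pi * \<Delta>))^2" by (simp add: sin_squared_eq)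
  also have "cos (pi * \<Delta>) = 1 - 2 * (sin (pi * \<Delta> / 2))^2"
    using cos_double_sin[of "pi * \<Delta> / 2"] by simp
  finally show ?thesis by (simp add: algebra_simps power2_eq_square)
qed

definition gg :: "real \<Rightarrow> nat \<Rightarrow> nat \<Rightarrow> complex" where
  "gg \<Delta> m a = (if a = m then lamD \<Delta> else 1)"

lemma go_offdiag: "x \<noteq> y \<Longrightarrow> grover_oracle N \<Delta> x y = 0"
  unfolding grover_oracle_def by (cases x; cases y) auto

lemma go_diag: "a \<in> {1..N} \<Longrightarrow> grover_oracle N \<Delta> (a, m) (a, m) = gg \<Delta> m a"
  unfolding grover_oracle_def gg_def lamD_def by auto

lemma ptrace_conj:
  assumes "a \<in> {1..N}" "b \<in> {1..N}"
  shows "ptrace {0..N} (conj_by ({1..N} \<times> {0..N}) (grover_oracle N \<Delta>) X) a b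
     = (\<Sum>m\<in>{0..N}. gg \<Delta> m a * X (a, m) (b, m) * cnj (gg \<Delta> m b))"
  unfolding ptrace_def
proof (rule sum.cong)
  fix m assume "m \<in> {0..N}"
  thus "conj_by ({1..N} \<times> {0..N}) (grover_oracle N \<Delta>) X (a, m) (b, m) = gg \<Delta> m a * X (a, m) (b, m) * cnj (gg \<Delta> m b)"
    using conj_by_diag[of "{1..N} \<times> {0..N}" "grover_oracle N \<Delta>" "(a, m)" "(b, m)" X] assms
    by (simp add: go_offdiag go_diag)
qed simp

lemma gg_norm: "gg \<Delta> m a * cnj (gg \<Delta> m a) = 1"
  unfolding gg_def using complex_norm_square[of "lamD \<Delta>"] lamD_cmod[of \<Delta>] by auto

lemma trace_conj:
  "(\<Sum>a\<in>{1..N}. ptrace {0..N} (conj_by ({1..N} \<times> {0..N}) (grover_oracle N \<Delta>) X) a a)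
    = (\<Sum>a\<in>{1..N}. ptrace {0..N} X a a)"
proof (rule sum.cong)
  fix a assume a: "a \<in> {1..N}"
  show "ptrace {0..N} (conj_by ({1..N} \<times> {0..N}) (grover_oracle N \<Delta>) X) a a = ptrace {0..N} X a a"
    unfolding ptrace_conj[OF a a] unfolding ptrace_def
  proof (rule sum.cong)
    fix m
    have "gg \<Delta> m a * X (a, m) (a, m) * cnj (gg \<Delta> m a) = X (a, m) (a, m) * (gg \<Delta> m a * cnj (gg \<Delta> m a))"
      by (simp only: mult_ac)
    thus "gg \<Delta> m a * X (a, m) (a, m) * cnj (gg \<Delta> m a) = X (a, m) (a, m)" by (simp add: gg_norm)
  qed simp
qed simp


definition sbeta :: "nat \<Rightarrow> real \<Rightarrow> real" where
  "sbeta N \<Delta> = 2 * sin (pi * \<Delta> / 2) * sqrt (real N - 1) / real N"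

lemma sbeta_facts:
  assumes N2: "N \<ge> 2" and D: "0 < \<Delta>" "\<Delta> \<le> 1"
  shows "0 < sbeta N \<Delta>" "sbeta N \<Delta> \<le> 1"
    "(sbeta N \<Delta>)^2 * (real N)^2 = 4 * (sin (pi * \<Delta> / 2))^2 * (real N - 1)"
    "sbeta N \<Delta> \<le> 2 * sqrt (real N - 1) / real N"
proof -
  define s where "s = sin (pi * \<Delta> / 2)"
  have sp: "s > 0" unfolding s_def using D by (intro sin_gt_zero) auto
  have s1: "s \<le> 1" unfolding s_def by simp
  have Nr: "real N \<ge> 2" using N2 by simp
  have q: "2 * sqrt (real N - 1) \<le> real N"
  proof (rule power2_le_imp_le)
    have "0 \<le> (real N - 2)^2" by simp
    hence "4 * (real N - 1) \<le> (real N)^2" by (simp add: power2_eq_square algebra_simps)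
    thus "(2 * sqrt (real N - 1))^2 \<le> (real N)^2" using Nr by (simp add: power_mult_distrib)
  qed (use Nr in simp)
  have sq: "sqrt (real N - 1) > 0" using Nr by simp
  show "0 < sbeta N \<Delta>" unfolding sbeta_def s_def[symmetric] using sp sq Nr by simp
  show le2: "sbeta N \<Delta> \<le> 2 * sqrt (real N - 1) / real N" unfolding sbeta_def s_def[symmetric]
    using sp s1 sq Nr by (intro divide_right_mono) (simp_all add: mult_left_le)
  also have "\<dots> \<le> 1" using q Nr by simp
  finally show "sbeta N \<Delta> \<le> 1" .
  show "(sbeta N \<Delta>)^2 * (real N)^2 = 4 * (sin (pi * \<Delta> / 2))^2 * (real N - 1)"
    unfolding sbeta_def using Nr by (simp add: power_mult_distrib power_divide)
qed

lemma beta_facts: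
  assumes N2: "N \<ge> 2" and D: "0 < \<Delta>" "\<Delta> \<le> 1"
  defines "\<beta> \<equiv> arcsin (sbeta N \<Delta>)"
  shows "0 < \<beta>" "\<beta> \<le> pi / 2" "sin \<beta> = sbeta N \<Delta>" "cos \<beta> \<ge> 0" "(sin \<beta>)^2 + (cos \<beta>)^2 = 1"
proof -
  have sb: "0 < sbeta N \<Delta>" "sbeta N \<Delta> \<le> 1" using sbeta_facts[OF assms(1-3)] by auto
  show "sin \<beta> = sbeta N \<Delta>" unfolding \<beta>_def using sb by simp
  show "0 < \<beta>" unfolding \<beta>_def using sb by (simp add: arcsin_less_arcsin[of 0, simplified])
  show "\<beta> \<le> pi / 2" unfolding \<beta>_def using sb arcsin_le_arcsin[of "sbeta N \<Delta>" 1] by simp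
  have "(sbeta N \<Delta>)^2 \<le> 1" using sb by (simp add: power_le_one)
  thus "cos \<beta> \<ge> 0" unfolding \<beta>_def using sb by (simp add: cos_arcsin)
  show "(sin \<beta>)^2 + (cos \<beta>)^2 = 1" by simp
qed

lemma F_step:
  fixes X :: "(nat \<times> nat) op" and N :: nat and \<Delta> a :: real
  assumes psd: "psd_on ({1..N} \<times> {0..N}) X" and N2: "N \<ge> 2" and D: "0 < \<Delta>" "\<Delta> \<le> 1"
    and a: "0 < a" "a + arcsin (sbeta N \<Delta>) \<le> pi / 2"
    and tr: "Re (\<Sum>a\<in>{1..N}. ptrace {0..N} X a a) = 1"
    and F: "(cos a)^2 \<le> Re (\<Sum>a\<in>{1..N}. \<Sum>b\<in>{1..N}. ptrace {0..N} X a b) / N"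
  shows "(cos (a + arcsin (sbeta N \<Delta>)))^2 \<le>
     Re (\<Sum>a\<in>{1..N}. \<Sum>b\<in>{1..N}. ptrace {0..N} (conj_by ({1..N} \<times> {0..N}) (grover_oracle N \<Delta>) X) a b) / N"
proof -
  define \<beta> where "\<beta> = arcsin (sbeta N \<Delta>)"
  note bf = beta_facts[OF N2 D, folded \<beta>_def]
  define sb where "sb = sbeta N \<Delta>"
  define cb where "cb = cos \<beta>"
  define S where "S = sin a"
  define C where "C = cos a"
  define sp where "sp = sin (a + \<beta>)"
  define cp where "cp = cos (a + \<beta>)"
  define c1 where "c1 = sp * cp / (S * C)"
  define c0 where "c0 = - cp * sb / S"
  have ab: "a + \<beta> \<le> pi / 2" using a \<beta>_def by simp
  have alt: "a < pi / 2" using ab bf(1) by simp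
  have Sp: "S > 0" unfolding S_def using a alt by (intro sin_gt_zero) auto
  have Cp: "C > 0" unfolding C_def using a alt by (intro cos_gt_zero) auto
  have spp: "sp > 0" unfolding sp_def using a ab bf by (intro sin_gt_zero) auto
  have cpn: "cp \<ge> 0" unfolding cp_def using a ab bf by (intro cos_ge_zero) auto
  have sbp: "sb > 0" unfolding sb_def using sbeta_facts[OF N2 D] by simp
  have Nr: "real N > 1" using N2 by simp
  have SC: "S^2 + C^2 = 1" unfolding S_def C_def by simp
  have sbb: "sin \<beta> = sb" unfolding sb_def using bf by simp
  have bb: "sb^2 + cb^2 = 1" unfolding cb_def sbb[symmetric] by simp
  have spE: "sp = S * cb + C * sb" unfolding sp_def S_def C_def cb_def sbb[symmetric] by (simp add: sin_add)
  have cpE: "cp = C * cb - S * sb" unfolding cp_def S_def C_def cb_def sbb[symmetric] by (simp add: cos_add)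
  have sbn: "sb^2 * (real N)^2 = 4 * (sin (pi * \<Delta> / 2))^2 * (real N - 1)"
    unfolding sb_def by (rule sbeta_facts(3)[OF N2 D])
  note AI = alg_ident[OF Sp Cp SC bb spE cpE c1_def c0_def Nr sbn]
  have AI1: "1 - c1 - c0 = sb * sp / C" and AI2: "c1 * C^2 + c0 = cp^2"
    and AI3: "(1 - c1)^2 + 4 * (sin (pi * \<Delta> / 2))^2 * c1 = (real N)^2 * ((1 - c1) / N - c0) * ((1 - c1) / N - c0 / (real N - 1))"
    using AI by simp_all
  have c0n: "c0 \<le> 0" unfolding c0_def using Sp cpn sbp by (simp add: divide_nonneg_pos)
  have c1p: "c1 \<ge> 0" unfolding c1_def using Sp Cp spp cpn by simp
  have c01: "1 - c1 - c0 \<ge> 0" unfolding AI1 using sbp spp Cp by simp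
  have alpha: "(1 - c1) / N - c0 > 0"
  proof -
    have "(1 - c1) / N - c0 = (1 - c1 - c0) / N + (- c0) * (1 - 1 / N)" using Nr by (simp add: field_simps)
    moreover have "(1 - c1 - c0) / N > 0" unfolding AI1 using sbp spp Cp Nr by simp
    moreover have "(- c0) * (1 - 1 / N) \<ge> 0"
    proof -
      have "1 - 1 / real N \<ge> 0" using Nr by simp
      thus ?thesis using c0n by (intro mult_nonneg_nonneg) auto
    qed
    ultimately show ?thesis by linarith
  qed
  have ident: "(cmod (lamD \<Delta> - c1))^2 = (real N)^2 * ((1 - c1) / N - c0) * ((1 - c1) / N - c0 / (real N - 1))"
    using lamD_dist[of \<Delta> c1] AI3 by simp
  define Y where "Y = (\<lambda>m a b. X (a, m) (b, m))"
  have psdY: "psd_on {1..N} (Y m)" if "m \<in> {0..N}" for m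
    unfolding Y_def by (rule psd_block[OF psd _ _ that]) auto
  have blk: "c1 * Re (\<Sum>a\<in>{1..N}. \<Sum>b\<in>{1..N}. Y m a b) / N + c0 * Re (\<Sum>a\<in>{1..N}. Y m a a)
    \<le> Re (\<Sum>a\<in>{1..N}. \<Sum>b\<in>{1..N}. gg \<Delta> m a * Y m a b * cnj (gg \<Delta> m b)) / N" if m: "m \<in> {0..N}" for m
  proof (cases "m = 0")
    case True
    have "(\<Sum>a\<in>{1..N}. \<Sum>b\<in>{1..N}. gg \<Delta> m a * Y m a b * cnj (gg \<Delta> m b)) = (\<Sum>a\<in>{1..N}. \<Sum>b\<in>{1..N}. Y m a b)"
      using True by (intro sum.cong refl) (auto simp: gg_def)
    thus ?thesis using block_ineq0[OF psdY[OF m] N2 c0n c01] by simp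
  next
    case False
    hence m1: "m \<in> {1..N}" using m by auto
    show ?thesis using block_ineq[OF psdY[OF m] N2 m1 lamD_cmod c0n alpha ident] unfolding gg_def by simp
  qed
  have swap1: "(\<Sum>a\<in>{1..N}. \<Sum>b\<in>{1..N}. ptrace {0..N} X a b) = (\<Sum>m\<in>{0..N}. \<Sum>a\<in>{1..N}. \<Sum>b\<in>{1..N}. Y m a b)"
    unfolding ptrace_def Y_def by (simp add: sum.swap[of _ "{0..N}"])
  have swap2: "(\<Sum>a\<in>{1..N}. ptrace {0..N} X a a) = (\<Sum>m\<in>{0..N}. \<Sum>a\<in>{1..N}. Y m a a)"
    unfolding ptrace_def Y_def by (simp add: sum.swap[of _ "{0..N}"])
  have swap3: "(\<Sum>a\<in>{1..N}. \<Sum>b\<in>{1..N}. ptrace {0..N} (conj_by ({1..N} \<times> {0..N}) (grover_oracle N \<Delta>) X) a b)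
     = (\<Sum>m\<in>{0..N}. \<Sum>a\<in>{1..N}. \<Sum>b\<in>{1..N}. gg \<Delta> m a * Y m a b * cnj (gg \<Delta> m b))"
  proof -
    have "(\<Sum>a\<in>{1..N}. \<Sum>b\<in>{1..N}. ptrace {0..N} (conj_by ({1..N} \<times> {0..N}) (grover_oracle N \<Delta>) X) a b)
      = (\<Sum>a\<in>{1..N}. \<Sum>b\<in>{1..N}. \<Sum>m\<in>{0..N}. gg \<Delta> m a * Y m a b * cnj (gg \<Delta> m b))"
      unfolding Y_def by (intro sum.cong refl ptrace_conj)
    thus ?thesis by (simp add: sum.swap[of _ "{0..N}"])
  qed
  have "c1 * (Re (\<Sum>a\<in>{1..N}. \<Sum>b\<in>{1..N}. ptrace {0..N} X a b) / N) + c0 * Re (\<Sum>a\<in>{1..N}. ptrace {0..N} X a a)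
     = (\<Sum>m\<in>{0..N}. c1 * Re (\<Sum>a\<in>{1..N}. \<Sum>b\<in>{1..N}. Y m a b) / N + c0 * Re (\<Sum>a\<in>{1..N}. Y m a a))"
    unfolding swap1 swap2 by (simp add: Re_sum sum.distrib sum_distrib_left sum_divide_distrib)
  also have "\<dots> \<le> (\<Sum>m\<in>{0..N}. Re (\<Sum>a\<in>{1..N}. \<Sum>b\<in>{1..N}. gg \<Delta> m a * Y m a b * cnj (gg \<Delta> m b)) / N)"
    by (rule sum_mono) (rule blk)
  also have "\<dots> = Re (\<Sum>a\<in>{1..N}. \<Sum>b\<in>{1..N}. ptrace {0..N} (conj_by ({1..N} \<times> {0..N}) (grover_oracle N \<Delta>) X) a b) / N"
    unfolding swap3 by (simp add: Re_sum sum_divide_distrib)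
  finally have main: "c1 * (Re (\<Sum>a\<in>{1..N}. \<Sum>b\<in>{1..N}. ptrace {0..N} X a b) / N) + c0
     \<le> Re (\<Sum>a\<in>{1..N}. \<Sum>b\<in>{1..N}. ptrace {0..N} (conj_by ({1..N} \<times> {0..N}) (grover_oracle N \<Delta>) X) a b) / N"
    using tr by simp
  have "cp^2 = c1 * C^2 + c0" using AI2 by simp
  also have "\<dots> \<le> c1 * (Re (\<Sum>a\<in>{1..N}. \<Sum>b\<in>{1..N}. ptrace {0..N} X a b) / N) + c0"
    using mult_left_mono[OF F c1p] unfolding C_def by simp
  finally show ?thesis using main unfolding cp_def \<beta>_def by simp
qed


lemma op_trace_Pi:
  assumes "j \<in> {1..N}"
  shows "op_trace ({1..N} \<times> {0..N}) (op_comp ({1..N} \<times> {0..N}) (grover_Pi N j) X) = of_nat N * X (j, j) (j, j)"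
proof -
  let ?S = "{1..N} \<times> {0..N}"
  have jj: "(j, j) \<in> ?S" using assms by auto
  have oc: "op_comp ?S (grover_Pi N j) X x x = (if x = (j, j) then of_nat N * X (j, j) x else 0)" for x
  proof -
    have "op_comp ?S (grover_Pi N j) X x x = (\<Sum>z\<in>?S. if z = (j, j) then (if x = (j, j) then of_nat N * X z x else 0) else 0)"
      unfolding op_comp_def grover_Pi_def by (rule sum.cong) auto
    also have "\<dots> = (if x = (j, j) then of_nat N * X (j, j) x else 0)" using jj by simp
    finally show ?thesis .
  qed
  show ?thesis unfolding op_trace_def oc using jj by simp
qed

lemma final_offdiag:
  fixes N K :: nat and \<rho> :: "nat \<Rightarrow> nat op" and \<rho>' :: "(nat \<times> nat) op"
  assumes N2: "N \<ge> 2" and psd': "psd_on ({1..N} \<times> {0..N}) \<rho>'"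
    and fin: "\<forall>a\<in>{1..N}. \<forall>b\<in>{1..N}. ptrace {0..N} \<rho>' a b = \<rho> K a b"
    and win: "\<forall>P\<in>grover_Pi N ` {1..N}. 1 \<le> Re (op_trace ({1..N} \<times> {0..N}) (op_comp ({1..N} \<times> {0..N}) P \<rho>'))"
    and tr: "(\<Sum>a\<in>{1..N}. \<rho> K a a) = 1"
  shows "\<forall>a\<in>{1..N}. \<forall>b\<in>{1..N}. a \<noteq> b \<longrightarrow> \<rho> K a b = 0"
proof -
  let ?S = "{1..N} \<times> {0..N}"
  let ?D = "(\<lambda>j. (j, j)) ` {1..N}"
  have Nr: "real N > 0" using N2 by simp
  have dj: "Re (\<rho>' (j, j) (j, j)) \<ge> 1 / N" if "j \<in> {1..N}" for j
  proof -
    have "1 \<le> Re (op_trace ?S (op_comp ?S (grover_Pi N j) \<rho>'))" using win that by auto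
    also have "\<dots> = N * Re (\<rho>' (j, j) (j, j))" unfolding op_trace_Pi[OF that] by simp
    finally show ?thesis using Nr by (simp add: field_simps)
  qed
  have nn: "Re (\<rho>' x x) \<ge> 0" if "x \<in> ?S" for x using psd_diag[OF psd' _ that] by simp
  have totS: "(\<Sum>x\<in>?S. Re (\<rho>' x x)) = 1"
  proof -
    have "(\<Sum>x\<in>?S. Re (\<rho>' x x)) = Re (\<Sum>a\<in>{1..N}. ptrace {0..N} \<rho>' a a)"
      unfolding ptrace_def by (simp add: Re_sum sum.cartesian_product)
    also have "\<dots> = Re (\<Sum>a\<in>{1..N}. \<rho> K a a)" using fin by simp
    also have "\<dots> = 1" unfolding tr by simp
    finally show ?thesis .
  qed
  have DS: "?D \<subseteq> ?S" by auto
  have totD: "(\<Sum>x\<in>?D. Re (\<rho>' x x)) \<ge> 1"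
  proof -
    have "(\<Sum>x\<in>?D. Re (\<rho>' x x)) = (\<Sum>j\<in>{1..N}. Re (\<rho>' (j, j) (j, j)))"
      by (subst sum.reindex) (auto simp: inj_on_def)
    also have "\<dots> \<ge> (\<Sum>j\<in>{1..N}. 1 / real N)" by (rule sum_mono) (rule dj)
    moreover have "(\<Sum>j\<in>{1..N}. 1 / real N) = 1" using Nr by simp
    ultimately show ?thesis by simp
  qed
  have "(\<Sum>x\<in>?S - ?D. Re (\<rho>' x x)) = (\<Sum>x\<in>?S. Re (\<rho>' x x)) - (\<Sum>x\<in>?D. Re (\<rho>' x x))"
    using sum.subset_diff[OF DS, of "\<lambda>x. Re (\<rho>' x x)"] by simp
  hence "(\<Sum>x\<in>?S - ?D. Re (\<rho>' x x)) \<le> 0" using totS totD by simp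
  moreover have "(\<Sum>x\<in>?S - ?D. Re (\<rho>' x x)) \<ge> 0" using nn by (intro sum_nonneg) auto
  ultimately have "(\<Sum>x\<in>?S - ?D. Re (\<rho>' x x)) = 0" by simp
  hence zero: "Re (\<rho>' x x) = 0" if "x \<in> ?S - ?D" for x
    using sum_nonneg_eq_0_iff[of "?S - ?D" "\<lambda>x. Re (\<rho>' x x)"] nn that by auto
  show ?thesis
  proof (intro ballI impI)
    fix a b assume a: "a \<in> {1..N}" and b: "b \<in> {1..N}" and ab: "a \<noteq> b"
    have "\<rho>' (a, m) (b, m) = 0" if m: "m \<in> {0..N}" for m
    proof (cases "m = a")
      case True
      hence "(b, m) \<in> ?S - ?D" using b m ab by auto
      thus ?thesis using psd_zero_row[OF psd' _ _ _ zero[OF \<open>(b, m) \<in> ?S - ?D\<close>], of "(a, m)"] a m by auto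
    next
      case False
      hence "(a, m) \<in> ?S - ?D" using a m by auto
      thus ?thesis using psd_zero_row[OF psd' _ _ _ zero[OF \<open>(a, m) \<in> ?S - ?D\<close>], of "(b, m)"] b m by auto
    qed
    hence "ptrace {0..N} \<rho>' a b = 0" unfolding ptrace_def by simp
    thus "\<rho> K a b = 0" using fin a b by simp
  qed
qed


lemma lower_bound:
  fixes N K :: nat and \<Delta> :: real
  assumes N2: "N \<ge> 2" and D: "0 < \<Delta>" "\<Delta> \<le> 1"
    and prot: "grover_protocol N \<Delta> K 1 \<rho> \<rho>t \<rho>'"
  shows "arccos (1 / sqrt N) \<le> real K * arcsin (sbeta N \<Delta>)"
proof -
  let ?A = "{1..N}" and ?M = "{0..N::nat}"
  let ?U = "grover_oracle N \<Delta>"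
  define \<beta> where "\<beta> = arcsin (sbeta N \<Delta>)"
  note bf = beta_facts[OF N2 D, folded \<beta>_def]
  have Nr: "real N \<ge> 2" using N2 by simp
  note P = prot[unfolded grover_protocol_def is_protocol_def]
  note psdk = P[THEN conjunct1]
  note psd' = P[THEN conjunct2, THEN conjunct1]
  note init = P[THEN conjunct2, THEN conjunct2, THEN conjunct1]
  note ptr = P[THEN conjunct2, THEN conjunct2, THEN conjunct2, THEN conjunct1]
  note evo = P[THEN conjunct2, THEN conjunct2, THEN conjunct2, THEN conjunct2, THEN conjunct1]
  note fin = P[THEN conjunct2, THEN conjunct2, THEN conjunct2, THEN conjunct2, THEN conjunct2, THEN conjunct1]
  note win = P[THEN conjunct2, THEN conjunct2, THEN conjunct2, THEN conjunct2, THEN conjunct2, THEN conjunct2]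
  have tr: "(\<Sum>a\<in>?A. \<rho> k a a) = 1" if "k \<le> K" for k
    using that
  proof (induction k)
    case 0
    have "(\<Sum>a\<in>?A. \<rho> 0 a a) = (\<Sum>a\<in>?A. complex_of_real (1 / N))"
      using init by (intro sum.cong refl) (simp add: grover_psi0_def flip: of_real_mult)
    also have "\<dots> = 1" using Nr by simp
    finally show ?case .
  next
    case (Suc k)
    hence kK: "k < K" "k \<le> K" by auto
    have "(\<Sum>a\<in>?A. \<rho> (Suc k) a a) = (\<Sum>a\<in>?A. ptrace ?M (conj_by (?A \<times> ?M) ?U (\<rho>t k)) a a)"
      using evo kK by simp
    also have "\<dots> = (\<Sum>a\<in>?A. ptrace ?M (\<rho>t k) a a)" by (rule trace_conj)
    also have "\<dots> = (\<Sum>a\<in>?A. \<rho> k a a)" using ptr kK by simp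
    finally show ?case using Suc by simp
  qed
  have off: "\<forall>a\<in>?A. \<forall>b\<in>?A. a \<noteq> b \<longrightarrow> \<rho> K a b = 0"
    by (rule final_offdiag[where \<rho>=\<rho> and K=K, OF N2 psd' fin win tr[of K, OF order_refl]])
  have FK: "Re (\<Sum>a\<in>?A. \<Sum>b\<in>?A. \<rho> K a b) / N = 1 / N"
  proof -
    have "(\<Sum>a\<in>?A. \<Sum>b\<in>?A. \<rho> K a b) = (\<Sum>a\<in>?A. \<Sum>b\<in>?A. if b = a then \<rho> K a a else 0)"
      using off by (intro sum.cong refl) auto
    also have "\<dots> = 1" using tr[of K] by simp
    finally show ?thesis by simp
  qed
  show ?thesis
  proof (rule ccontr)
    assume "\<not> arccos (1 / sqrt N) \<le> real K * arcsin (sbeta N \<Delta>)"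
    hence lt: "real K * \<beta> < arccos (1 / sqrt N)" unfolding \<beta>_def by simp
    define aK where "aK = arccos (1 / sqrt N)"
    define \<epsilon> where "\<epsilon> = (aK - real K * \<beta>) / 2"
    have isq: "0 < 1 / sqrt N" "1 / sqrt N \<le> 1" using Nr by auto
    have aKle: "aK \<le> pi / 2" unfolding aK_def using isq by (intro arccos_le_pi2) auto
    have cK: "cos aK = 1 / sqrt N" unfolding aK_def by (rule cos_arccos) (use isq in linarith)+
    have ep: "\<epsilon> > 0" unfolding \<epsilon>_def aK_def using lt by simp
    have lt': "real K * \<beta> < aK" using lt aK_def by simp
    have epK: "\<epsilon> + real K * \<beta> < aK" unfolding \<epsilon>_def using lt' by (simp add: field_simps)
    have Fk: "(cos (\<epsilon> + real k * \<beta>))^2 \<le> Re (\<Sum>a\<in>?A. \<Sum>b\<in>?A. \<rho> k a b) / N" if "k \<le> K" for k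
      using that
    proof (induction k)
      case 0
      have "(\<Sum>a\<in>?A. \<Sum>b\<in>?A. \<rho> 0 a b) = (\<Sum>a\<in>?A. \<Sum>b\<in>?A. complex_of_real (1 / N))"
        using init by (intro sum.cong refl) (simp add: grover_psi0_def flip: of_real_mult)
      also have "\<dots> = of_nat N" using Nr by simp
      finally have "Re (\<Sum>a\<in>?A. \<Sum>b\<in>?A. \<rho> 0 a b) / N = 1" using Nr by simp
      moreover have "(cos (\<epsilon> + real 0 * \<beta>))^2 \<le> 1" by (simp add: cos_squared_eq)
      ultimately show ?case by simp
    next
      case (Suc k)
      hence kK: "k < K" "k \<le> K" by auto
      have step_le: "\<epsilon> + real k * \<beta> + \<beta> \<le> pi / 2"
      proof -
        have "real (Suc k) \<le> real K" using kK by simp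
        hence "real (Suc k) * \<beta> \<le> real K * \<beta>" using bf by (intro mult_right_mono) auto
        thus ?thesis using epK aKle by (simp add: algebra_simps)
      qed
      have psdX: "psd_on (?A \<times> ?M) (\<rho>t k)" using psdk kK by simp
      have trX: "Re (\<Sum>a\<in>?A. ptrace ?M (\<rho>t k) a a) = 1" using tr[of k] ptr kK by simp
      have FX: "(cos (\<epsilon> + real k * \<beta>))^2 \<le> Re (\<Sum>a\<in>?A. \<Sum>b\<in>?A. ptrace ?M (\<rho>t k) a b) / N"
        using Suc.IH[OF kK(2)] ptr kK by simp
      have "0 \<le> real k * \<beta>" using bf by simp
      hence pos: "0 < \<epsilon> + real k * \<beta>" using ep by linarith
      have "(cos (\<epsilon> + real k * \<beta> + \<beta>))^2 \<le>
        Re (\<Sum>a\<in>?A. \<Sum>b\<in>?A. ptrace ?M (conj_by (?A \<times> ?M) ?U (\<rho>t k)) a b) / N"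
        using F_step[OF psdX N2 D pos _ trX FX] step_le unfolding \<beta>_def by simp
      also have "(\<Sum>a\<in>?A. \<Sum>b\<in>?A. ptrace ?M (conj_by (?A \<times> ?M) ?U (\<rho>t k)) a b) = (\<Sum>a\<in>?A. \<Sum>b\<in>?A. \<rho> (Suc k) a b)"
        using evo kK by simp
      finally show ?case by (simp add: algebra_simps)
    qed
    have "(cos (\<epsilon> + real K * \<beta>))^2 \<le> 1 / N" using Fk[of K] unfolding FK by simp
    moreover have "cos aK < cos (\<epsilon> + real K * \<beta>)"
    proof -
      have "0 \<le> real K * \<beta>" using bf by simp
      thus ?thesis using epK ep aKle by (subst cos_mono_less_eq) (use pi_gt_zero in linarith)+
    qed
    hence "(cos aK)^2 < (cos (\<epsilon> + real K * \<beta>))^2" using cK isq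
      by (intro power_strict_mono) auto
    moreover have "(cos aK)^2 = 1 / N" unfolding cK using Nr by (simp add: power_divide)
    ultimately show False by simp
  qed
qed

definition vf :: "nat \<Rightarrow> complex \<Rightarrow> complex \<Rightarrow> complex \<Rightarrow> nat \<Rightarrow> nat \<Rightarrow> complex" where
  "vf N z x y m a = (if m = 0 then z / sqrt N else (x / sqrt N + (if a = m then y else 0)) / sqrt N)"

definition EE :: "nat \<Rightarrow> complex \<Rightarrow> complex \<Rightarrow> complex \<Rightarrow> complex" where
  "EE N z x y = z * cnj z + x * cnj x + (x * cnj y + y * cnj x) / sqrt N + y * cnj y"

lemma famsum:
  assumes N: "N \<ge> 1" and a: "a \<in> {1..N}" and b: "b \<in> {1..N}"
  shows "(\<Sum>m\<in>{0..N}. vf N z x y m a * cnj (vf N z x y m b))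
    = (EE N z x y - y * cnj y + (if a = b then y * cnj y else 0)) / of_nat N"
proof -
  define r where "r = complex_of_real (sqrt N)"
  have Nr: "real N > 0" using N by simp
  have sq: "of_nat N = r * r" unfolding r_def using Nr by (simp flip: of_real_mult)
  have r0: "r \<noteq> 0" unfolding r_def using Nr by simp
  have cr: "cnj r = r" unfolding r_def by simp
  have vfr: "vf N z x y m a = (if m = 0 then z / r else (x / r + (if a = m then y else 0)) / r)" for z x y m a
    unfolding vf_def r_def ..
  have EEr: "EE N z x y = z * cnj z + x * cnj x + (x * cnj y + y * cnj x) / r + y * cnj y"
    unfolding EE_def r_def ..
  have "{0..N} = insert 0 {1..N}" by auto
  hence "(\<Sum>m\<in>{0..N}. vf N z x y m a * cnj (vf N z x y m b))
    = vf N z x y 0 a * cnj (vf N z x y 0 b) + (\<Sum>m\<in>{1..N}. vf N z x y m a * cnj (vf N z x y m b))" by simp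
  also have "vf N z x y 0 a * cnj (vf N z x y 0 b) = z * cnj z / (r * r)"
    unfolding vfr using cr by simp
  also have "(\<Sum>m\<in>{1..N}. vf N z x y m a * cnj (vf N z x y m b))
    = (\<Sum>m\<in>{1..N}. x * cnj x / (r * r * r * r) + (if m = b then x * cnj y / (r * r * r) else 0)
        + (if m = a then y * cnj x / (r * r * r) else 0) + (if m = a then (if a = b then y * cnj y / (r * r) else 0) else 0))"
  proof (rule sum.cong)
    fix m assume "m \<in> {1..N}"
    hence "m \<noteq> 0" by auto
    thus "vf N z x y m a * cnj (vf N z x y m b) = x * cnj x / (r * r * r * r) + (if m = b then x * cnj y / (r * r * r) else 0)
        + (if m = a then y * cnj x / (r * r * r) else 0) + (if m = a then (if a = b then y * cnj y / (r * r) else 0) else 0)"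
      unfolding vfr using cr r0 by (auto simp: field_simps)
  qed simp
  also have "\<dots> = of_nat N * (x * cnj x / (r * r * r * r)) + x * cnj y / (r * r * r) + y * cnj x / (r * r * r)
      + (if a = b then y * cnj y / (r * r) else 0)"
    using a b by (simp add: sum.distrib)
  finally show ?thesis unfolding EEr sq using r0 by (simp add: field_simps)
qed


lemma gg_vf:
  assumes "a \<in> {1..N}"
  shows "gg \<Delta> m a * vf N z x y m a = vf N z x (lamD \<Delta> * y + (lamD \<Delta> - 1) * x / sqrt N) m a"
  using assms unfolding gg_def vf_def by (auto simp: field_simps)

lemma EE_inv:
  assumes lam: "lam * cnj lam = 1" and N: "N \<ge> 1"
  shows "EE N z x (lam * y + (lam - 1) * x / sqrt N) = EE N z x y"
proof -
  define r where "r = complex_of_real (sqrt N)"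
  have r0: "r \<noteq> 0" unfolding r_def using N by simp
  have cr: "cnj r = r" unfolding r_def by simp
  have EEr: "EE N z x y = z * cnj z + x * cnj x + (x * cnj y + y * cnj x) / r + y * cnj y" for z x y
    unfolding EE_def r_def ..
  define cl where "cl = cnj lam"
  have l: "lam * cl = 1" using lam cl_def by simp
  have "EE N z x (lam * y + (lam - 1) * x / sqrt N) * (r * r) = EE N z x y * (r * r)"
    unfolding EEr r_def[symmetric] using r0 cr
    apply (simp add: field_simps cl_def[symmetric])
    using l by algebra
  thus ?thesis using r0 by simp
qed


definition aK :: "nat \<Rightarrow> real" where "aK N = arccos (1 / sqrt N)"
definition bet :: "nat \<Rightarrow> real \<Rightarrow> real" where "bet N \<Delta> = arcsin (sbeta N \<Delta>)"
definition KK :: "nat \<Rightarrow> real \<Rightarrow> nat" where "KK N \<Delta> = nat \<lceil>aK N / bet N \<Delta>\<rceil>"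
definition ang :: "nat \<Rightarrow> real \<Rightarrow> nat \<Rightarrow> real" where "ang N \<Delta> k = min (real k * bet N \<Delta>) (aK N)"

lemma aK_facts:
  assumes N2: "N \<ge> 2"
  shows "cos (aK N) = 1 / sqrt N" "sin (aK N) = sqrt (real N - 1) / sqrt N" "0 < aK N" "aK N \<le> pi / 2"
    "pi / 4 \<le> aK N" "sin (aK N) > 0"
proof -
  have Nr: "real N \<ge> 2" using N2 by simp
  have isq: "0 < 1 / sqrt N" "1 / sqrt N < 1" using Nr by (auto simp: real_less_rsqrt)
  show cK: "cos (aK N) = 1 / sqrt N" unfolding aK_def by (rule cos_arccos) (use isq in linarith)+
  have "sin (aK N) = sqrt (1 - (1 / sqrt N)^2)" unfolding aK_def by (rule sin_arccos) (use isq in linarith)+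
  also have "1 - (1 / sqrt N)^2 = (real N - 1) / N" using Nr by (simp add: power_divide field_simps)
  finally show sK: "sin (aK N) = sqrt (real N - 1) / sqrt N" by (simp add: real_sqrt_divide)
  show "0 < aK N" unfolding aK_def using arccos_lt_bounded[of "1 / sqrt N"] isq by auto
  show aKle: "aK N \<le> pi / 2" unfolding aK_def using isq by (intro arccos_le_pi2) auto
  show "sin (aK N) > 0" unfolding sK using Nr by simp
  have "cos (aK N) \<le> cos (pi / 4)"
  proof -
    have "1 / sqrt (real N) \<le> 1 / sqrt 2" using Nr by (simp add: frac_le)
    also have "1 / sqrt 2 = sqrt 2 / 2" by (simp add: field_simps)
    finally show ?thesis unfolding cK cos_45 .
  qed
  moreover have "0 \<le> aK N" unfolding aK_def by (rule arccos_lbound) (use isq in linarith)+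
  ultimately show "pi / 4 \<le> aK N" using aKle by (subst (asm) cos_mono_le_eq) auto
qed

lemma bet_le:
  assumes N2: "N \<ge> 2" and D: "0 < \<Delta>" "\<Delta> \<le> 1"
  shows "bet N \<Delta> \<le> pi - 2 * aK N"
proof -
  note af = aK_facts[OF N2]
  note bf = beta_facts[OF N2 D, folded bet_def]
  have Nr: "real N \<ge> 2" using N2 by simp
  have "sin (bet N \<Delta>) \<le> sin (pi - 2 * aK N)"
  proof -
    have "sin (pi - 2 * aK N) = 2 * sin (aK N) * cos (aK N)" by (simp add: sin_double)
    also have "\<dots> = 2 * sqrt (real N - 1) / N" unfolding af(1,2) using Nr
      by (simp add: field_simps)
    finally show ?thesis using bf(3) sbeta_facts(4)[OF N2 D] by simp
  qed
  thus ?thesis using bf af by (subst (asm) sin_mono_le_eq) auto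
qed

lemma KK_facts:
  assumes N2: "N \<ge> 2" and D: "0 < \<Delta>" "\<Delta> \<le> 1"
  shows "KK N \<Delta> \<ge> 1" "aK N \<le> real (KK N \<Delta>) * bet N \<Delta>"
    "\<And>k. k < KK N \<Delta> \<Longrightarrow> real k * bet N \<Delta> < aK N"
    "real (KK N \<Delta>) = of_int \<lceil>aK N / bet N \<Delta>\<rceil>"
proof -
  note af = aK_facts[OF N2]
  note bf = beta_facts[OF N2 D, folded bet_def]
  have r: "aK N / bet N \<Delta> > 0" using af bf by simp
  hence c: "\<lceil>aK N / bet N \<Delta>\<rceil> \<ge> 1" by (simp add: one_le_ceiling)
  show KKr: "real (KK N \<Delta>) = of_int \<lceil>aK N / bet N \<Delta>\<rceil>" unfolding KK_def using c by simp
  show "KK N \<Delta> \<ge> 1" unfolding KK_def using c by (simp add: le_nat_iff)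
  have "aK N / bet N \<Delta> \<le> real (KK N \<Delta>)" unfolding KKr by simp
  thus "aK N \<le> real (KK N \<Delta>) * bet N \<Delta>" using bf by (simp add: field_simps)
  fix k assume "k < KK N \<Delta>"
  hence "int k < \<lceil>aK N / bet N \<Delta>\<rceil>" unfolding KK_def by linarith
  hence "real k < aK N / bet N \<Delta>" by (simp add: less_ceiling_iff)
  thus "real k * bet N \<Delta> < aK N" using bf by (simp add: field_simps)
qed


definition tau :: "nat \<Rightarrow> real \<Rightarrow> nat \<Rightarrow> real" where
  "tau N \<Delta> k = (sin (ang N \<Delta> (Suc k)) - cos (bet N \<Delta>) * sin (ang N \<Delta> k)) / sbeta N \<Delta>"

lemma ang_lt:
  assumes N2: "N \<ge> 2" and D: "0 < \<Delta>" "\<Delta> \<le> 1" and k: "k < KK N \<Delta>"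
  shows "ang N \<Delta> k = real k * bet N \<Delta>"
  using KK_facts(3)[OF N2 D k] unfolding ang_def by simp

lemma ang_KK:
  assumes N2: "N \<ge> 2" and D: "0 < \<Delta>" "\<Delta> \<le> 1"
  shows "ang N \<Delta> (KK N \<Delta>) = aK N"
  using KK_facts(2)[OF N2 D] unfolding ang_def by simp

lemma tau_bounds:
  assumes N2: "N \<ge> 2" and D: "0 < \<Delta>" "\<Delta> \<le> 1" and k: "k < KK N \<Delta>"
  shows "0 \<le> tau N \<Delta> k" "tau N \<Delta> k \<le> cos (ang N \<Delta> k)"
proof -
  note af = aK_facts[OF N2]
  note bf = beta_facts[OF N2 D, folded bet_def]
  define \<beta> where "\<beta> = bet N \<Delta>"
  define a where "a = real k * \<beta>"
  define a' where "a' = ang N \<Delta> (Suc k)"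
  have aa: "ang N \<Delta> k = a" unfolding a_def \<beta>_def by (rule ang_lt[OF N2 D k])
  have alt: "a < aK N" unfolding a_def \<beta>_def by (rule KK_facts(3)[OF N2 D k])
  have a0: "0 \<le> a" unfolding a_def \<beta>_def using bf by simp
  have a'def: "a' = min (a + \<beta>) (aK N)" unfolding a'_def ang_def a_def \<beta>_def by (simp add: algebra_simps)
  have aa': "a \<le> a'" unfolding a'def using alt bf \<beta>_def by simp
  have a'K: "a' \<le> aK N" unfolding a'def by simp
  have sb: "sbeta N \<Delta> > 0" using sbeta_facts[OF N2 D] by simp
  have S0: "sin a \<ge> 0" using a0 alt af by (intro sin_ge_zero) auto
  have C0: "cos a \<ge> 0" using a0 alt af by (intro cos_ge_zero) auto
  have SS': "sin a \<le> sin a'" using a0 aa' a'K af by (intro sin_monotone_2pi_le) auto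
  have cb1: "cos \<beta> \<le> 1" by simp
  have cbS: "cos \<beta> * sin a \<le> sin a" using mult_right_mono[OF cb1 S0] by simp
  have up: "sin a' \<le> sin (a + \<beta>)"
  proof (cases "a + \<beta> \<le> pi / 2")
    case True
    have "a' \<le> a + \<beta>" unfolding a'def by simp
    thus ?thesis using True a0 aa' by (intro sin_monotone_2pi_le) auto
  next
    case False
    have b2: "\<beta> \<le> pi - 2 * aK N" unfolding \<beta>_def by (rule bet_le[OF N2 D])
    have "sin a' \<le> sin (aK N)" using a0 aa' a'K af by (intro sin_monotone_2pi_le) auto
    also have "sin (aK N) \<le> sin (pi - (a + \<beta>))" using False alt b2 af by (intro sin_monotone_2pi_le) auto
    also have "\<dots> = sin (a + \<beta>)" by simp
    finally show ?thesis .
  qed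
  have "sin (a + \<beta>) = sin a * cos \<beta> + cos a * sbeta N \<Delta>" unfolding sin_add \<beta>_def using bf by simp
  show "0 \<le> tau N \<Delta> k" unfolding tau_def a'_def[symmetric] aa \<beta>_def[symmetric]
    using SS' cbS sb by simp
  show "tau N \<Delta> k \<le> cos (ang N \<Delta> k)" unfolding tau_def a'_def[symmetric] aa \<beta>_def[symmetric]
    using up \<open>sin (a + \<beta>) = _\<close> sb by (simp add: field_simps)
qed


definition mu :: "nat \<Rightarrow> real \<Rightarrow> complex" where
  "mu N \<Delta> = lamD \<Delta> - (lamD \<Delta> - 1) / of_nat N"
definition ph :: "nat \<Rightarrow> real \<Rightarrow> complex" where
  "ph N \<Delta> = (if mu N \<Delta> = 0 then 1 else (mu N \<Delta> / of_real (cmod (mu N \<Delta>))) * (cnj (lamD \<Delta> - 1) / of_real (cmod (lamD \<Delta> - 1))))"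
definition yk :: "nat \<Rightarrow> real \<Rightarrow> nat \<Rightarrow> real" where
  "yk N \<Delta> k = sin (ang N \<Delta> k) / sin (aK N)"
definition xk :: "nat \<Rightarrow> real \<Rightarrow> nat \<Rightarrow> complex" where
  "xk N \<Delta> k = of_real (tau N \<Delta> k) * ph N \<Delta> - of_real (yk N \<Delta> k) / sqrt N"
definition zk :: "nat \<Rightarrow> real \<Rightarrow> nat \<Rightarrow> real" where
  "zk N \<Delta> k = sqrt ((cos (ang N \<Delta> k))^2 - (tau N \<Delta> k)^2)"

lemma lam1_cmod:
  assumes D: "0 < \<Delta>" "\<Delta> \<le> 1"
  shows "cmod (lamD \<Delta> - 1) = 2 * sin (pi * \<Delta> / 2)"
proof -
  have s0: "sin (pi * \<Delta> / 2) \<ge> 0" using D by (intro sin_ge_zero) auto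
  have h: "(cmod (lamD \<Delta> - 1))^2 = 4 * (sin (pi * \<Delta> / 2))^2"
    using lamD_dist[of \<Delta> 1] by simp
  also have "\<dots> = (2 * sin (pi * \<Delta> / 2))^2" by (simp add: power_mult_distrib)
  finally show ?thesis by (rule power2_eq_imp_eq) (use s0 in auto)
qed

lemma mu_cmod:
  assumes N2: "N \<ge> 2" and D: "0 < \<Delta>" "\<Delta> \<le> 1"
  shows "cmod (mu N \<Delta>) = cos (bet N \<Delta>)"
proof -
  note bf = beta_facts[OF N2 D, folded bet_def]
  have Nr: "real N \<ge> 2" using N2 by simp
  define c where "c = - 1 / (real N - 1)"
  define s where "s = sin (pi * \<Delta> / 2)"
  have m: "mu N \<Delta> = of_real ((real N - 1) / N) * (lamD \<Delta> - of_real c)"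
    unfolding mu_def c_def using Nr by (simp add: field_simps)
  have "(cmod (mu N \<Delta>))^2 = ((real N - 1) / N)^2 * ((1 - c)^2 + 4 * s^2 * c)"
    unfolding m norm_mult norm_of_real power_mult_distrib power2_abs lamD_dist s_def ..
  also have "\<dots> = 1 - 4 * s^2 * (real N - 1) / (real N)^2"
  proof -
    define n where "n = real N - 1"
    have n0: "n > 0" "real N = n + 1" unfolding n_def using Nr by auto
    have e1: "1 - (- 1 / n) = (n + 1) / n" using n0 by (simp add: field_simps)
    have p0: "n + 1 > 0" using n0 by simp
    have A: "(n / (n + 1))^2 * ((n + 1) / n)^2 = 1"
    proof -
      have "n / (n + 1) * ((n + 1) / n) = 1" using n0 p0 by simp
      thus ?thesis by (metis power_mult_distrib power_one)
    qed
    have B: "(n / (n + 1))^2 * (4 * s^2 * (- 1 / n)) = - (4 * s^2 * n / (n + 1)^2)"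
      using n0 p0 by (simp add: power_divide power2_eq_square)
    have "(n / (n + 1))^2 * ((1 - (- 1 / n))^2 + 4 * s^2 * (- 1 / n)) = 1 - 4 * s^2 * n / (n + 1)^2"
      unfolding e1 distrib_left A B by simp
    thus ?thesis unfolding c_def n_def[symmetric] n0(2) by simp
  qed
  also have "4 * s^2 * (real N - 1) = (sbeta N \<Delta>)^2 * (real N)^2"
    using sbeta_facts(3)[OF N2 D] unfolding s_def by simp
  also have "1 - (sbeta N \<Delta>)^2 * (real N)^2 / (real N)^2 = (cos (bet N \<Delta>))^2"
    using bf Nr by simp
  finally show ?thesis by (rule power2_eq_imp_eq) (use bf in auto)
qed


lemma mult_cnj_cmod: "w * cnj w = of_real (cmod w) * of_real (cmod w)"
  by (simp add: complex_norm_square[symmetric] power2_eq_square)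

lemma unit_mult: "w \<noteq> 0 \<Longrightarrow> (w / of_real (cmod w)) * cnj (w / of_real (cmod w)) = 1"
proof -
  assume w: "w \<noteq> 0"
  have "(w / of_real (cmod w)) * cnj (w / of_real (cmod w)) = (w * cnj w) / (of_real (cmod w) * of_real (cmod w))"
    by simp
  also have "w * cnj w = of_real (cmod w) * of_real (cmod w)"
    by (simp add: complex_norm_square[symmetric] power2_eq_square)
  finally show ?thesis using w by simp
qed

lemma ph_facts:
  assumes N2: "N \<ge> 2" and D: "0 < \<Delta>" "\<Delta> \<le> 1"
  shows "ph N \<Delta> * cnj (ph N \<Delta>) = 1"
    "mu N \<Delta> \<noteq> 0 \<Longrightarrow> (lamD \<Delta> - 1) * ph N \<Delta> = mu N \<Delta> * of_real (cmod (lamD \<Delta> - 1) / cmod (mu N \<Delta>))"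
proof -
  have s: "sin (pi * \<Delta> / 2) > 0" using D by (intro sin_gt_zero) auto
  have l1: "lamD \<Delta> - 1 \<noteq> 0" using lam1_cmod[OF D] s by auto
  have l1c: "cnj (lamD \<Delta> - 1) \<noteq> 0" using l1 by simp
  show "ph N \<Delta> * cnj (ph N \<Delta>) = 1"
  proof (cases "mu N \<Delta> = 0")
    case True thus ?thesis unfolding ph_def by simp
  next
    case False
    have e: "cnj (lamD \<Delta> - 1) / of_real (cmod (lamD \<Delta> - 1)) = cnj (lamD \<Delta> - 1) / of_real (cmod (cnj (lamD \<Delta> - 1)))"
      by (simp only: complex_mod_cnj)
    have "ph N \<Delta> * cnj (ph N \<Delta>) = ((mu N \<Delta> / of_real (cmod (mu N \<Delta>))) * cnj (mu N \<Delta> / of_real (cmod (mu N \<Delta>))))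
       * ((cnj (lamD \<Delta> - 1) / of_real (cmod (cnj (lamD \<Delta> - 1)))) * cnj (cnj (lamD \<Delta> - 1) / of_real (cmod (cnj (lamD \<Delta> - 1)))))"
      unfolding ph_def e using False by (simp only: if_False complex_cnj_mult mult_ac)
    also have "\<dots> = 1" using unit_mult[OF False] unit_mult[OF l1c] by simp
    finally show ?thesis .
  qed
  assume m0: "mu N \<Delta> \<noteq> 0"
  have "(lamD \<Delta> - 1) * ph N \<Delta> = (mu N \<Delta> / of_real (cmod (mu N \<Delta>))) * (((lamD \<Delta> - 1) * cnj (lamD \<Delta> - 1)) / of_real (cmod (lamD \<Delta> - 1)))"
    unfolding ph_def using m0 by (simp add: mult_ac)
  also have "(lamD \<Delta> - 1) * cnj (lamD \<Delta> - 1) = of_real (cmod (lamD \<Delta> - 1)) * of_real (cmod (lamD \<Delta> - 1))"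
    by (rule mult_cnj_cmod)
  finally show "(lamD \<Delta> - 1) * ph N \<Delta> = mu N \<Delta> * of_real (cmod (lamD \<Delta> - 1) / cmod (mu N \<Delta>))"
    using m0 l1 by simp
qed


lemma EE_form:
  assumes p: "p * cnj p = 1" and N: "N \<ge> 1"
  shows "EE N (of_real z) (of_real t * p - of_real y / sqrt N) (of_real y) = of_real (z^2 + t^2 + y^2 - y^2 / N)"
proof -
  define r where "r = complex_of_real (sqrt N)"
  have r0: "r \<noteq> 0" unfolding r_def using N by simp
  have cr: "cnj r = r" unfolding r_def by simp
  have rr: "of_nat N = r * r" unfolding r_def using N by (simp flip: of_real_mult)
  have rs: "complex_of_real (sqrt (real N)) = r" unfolding r_def ..
  have EEr: "EE N z x y = z * cnj z + x * cnj x + (x * cnj y + y * cnj x) / r + y * cnj y" for z x y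
    unfolding EE_def r_def ..
  define cp where "cp = cnj p"
  have l: "p * cp = 1" using p cp_def by simp
  have "EE N (of_real z) (of_real t * p - of_real y / sqrt N) (of_real y) * (r * r) = of_real (z^2 + t^2 + y^2 - y^2 / N) * (r * r)"
    unfolding EEr rs using r0 cr
    apply (simp add: field_simps cp_def[symmetric] rr power2_eq_square rs)
    using l by (simp add: mult.commute)
  thus ?thesis using r0 by simp
qed


lemma yk_nonneg:
  assumes N2: "N \<ge> 2" and D: "0 < \<Delta>" "\<Delta> \<le> 1"
  shows "yk N \<Delta> k \<ge> 0"
proof -
  note af = aK_facts[OF N2]
  note bf = beta_facts[OF N2 D, folded bet_def]
  have "0 \<le> ang N \<Delta> k" "ang N \<Delta> k \<le> aK N" unfolding ang_def using bf af by auto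
  hence "sin (ang N \<Delta> k) \<ge> 0" using af by (intro sin_ge_zero) auto
  thus ?thesis unfolding yk_def by (rule divide_nonneg_pos) (use af(6) in auto)
qed

lemma yk_KK:
  assumes N2: "N \<ge> 2" and D: "0 < \<Delta>" "\<Delta> \<le> 1"
  shows "yk N \<Delta> (KK N \<Delta>) = 1"
  unfolding yk_def ang_KK[OF N2 D] using aK_facts(6)[OF N2] by simp

lemma yk_0: "N \<ge> 2 \<Longrightarrow> yk N \<Delta> 0 = 0"
  unfolding yk_def ang_def using aK_facts(3)[of N] by simp

lemma y_step:
  assumes N2: "N \<ge> 2" and D: "0 < \<Delta>" "\<Delta> \<le> 1" and k: "k < KK N \<Delta>"
  shows "cmod (lamD \<Delta> * of_real (yk N \<Delta> k) + (lamD \<Delta> - 1) * xk N \<Delta> k / sqrt N) = yk N \<Delta> (Suc k)"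
proof -
  note af = aK_facts[OF N2]
  note bf = beta_facts[OF N2 D, folded bet_def]
  define y where "y = yk N \<Delta> k"
  define t where "t = tau N \<Delta> k"
  define r where "r = complex_of_real (sqrt N)"
  define l where "l = lamD \<Delta>"
  have Nr: "real N \<ge> 2" using N2 by simp
  have r0: "r \<noteq> 0" unfolding r_def using Nr by simp
  have rr: "of_nat N = r * r" unfolding r_def using Nr by (simp flip: of_real_mult)
  have rs: "complex_of_real (sqrt (real N)) = r" unfolding r_def ..
  have y0: "y \<ge> 0" unfolding y_def by (rule yk_nonneg[OF N2 D])
  have t0: "t \<ge> 0" unfolding t_def by (rule tau_bounds(1)[OF N2 D k])
  have yprime: "l * of_real y + (l - 1) * xk N \<Delta> k / sqrt N = mu N \<Delta> * of_real y + (l - 1) * ph N \<Delta> * of_real t / r"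
    unfolding xk_def mu_def y_def[symmetric] t_def[symmetric] l_def[symmetric] rs rr using r0
    by (simp add: field_simps rs)
  have cm: "cmod (mu N \<Delta> * of_real y + (l - 1) * ph N \<Delta> * of_real t / r) = cmod (mu N \<Delta>) * y + cmod (l - 1) * t / sqrt N"
  proof (cases "mu N \<Delta> = 0")
    case True
    hence "mu N \<Delta> * of_real y + (l - 1) * ph N \<Delta> * of_real t / r = (l - 1) * of_real (t / sqrt N)"
      unfolding ph_def r_def by simp
    thus ?thesis using True t0 by (simp add: norm_mult norm_divide)
  next
    case False
    have "(l - 1) * ph N \<Delta> = mu N \<Delta> * of_real (cmod (l - 1) / cmod (mu N \<Delta>))"
      unfolding l_def by (rule ph_facts(2)[OF N2 D False])
    note e = this
    define c where "c = cmod (l - 1) / cmod (mu N \<Delta>)"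
    have "(l - 1) * ph N \<Delta> * of_real t / r = ((l - 1) * ph N \<Delta>) * (of_real t / r)" by simp
    also have "\<dots> = mu N \<Delta> * (of_real c * (of_real t / r))" unfolding e c_def by simp
    also have "of_real c * (of_real t / r) = complex_of_real (c * t / sqrt N)" unfolding r_def by simp
    finally have "mu N \<Delta> * of_real y + (l - 1) * ph N \<Delta> * of_real t / r
       = mu N \<Delta> * of_real (y + c * t / sqrt N)" by (simp add: distrib_left)
    hence "mu N \<Delta> * of_real y + (l - 1) * ph N \<Delta> * of_real t / r
       = mu N \<Delta> * of_real (y + cmod (l - 1) / cmod (mu N \<Delta>) * t / sqrt N)" unfolding c_def .
    note E1 = this
    have w0: "y + cmod (l - 1) / cmod (mu N \<Delta>) * t / sqrt N \<ge> 0" using y0 t0 by simp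
    have "cmod (mu N \<Delta> * of_real y + (l - 1) * ph N \<Delta> * of_real t / r)
       = cmod (mu N \<Delta>) * (y + cmod (l - 1) / cmod (mu N \<Delta>) * t / sqrt N)"
      unfolding E1 norm_mult norm_of_real using w0 by simp
    also have "\<dots> = cmod (mu N \<Delta>) * y + cmod (l - 1) * t / sqrt N" using False by (simp add: field_simps)
    finally show ?thesis .
  qed
  have "cmod (lamD \<Delta> * of_real (yk N \<Delta> k) + (lamD \<Delta> - 1) * xk N \<Delta> k / sqrt N)
     = cos (bet N \<Delta>) * y + 2 * sin (pi * \<Delta> / 2) * t / sqrt N"
    using yprime cm unfolding l_def y_def mu_cmod[OF N2 D] lam1_cmod[OF D] by simp
  also have "\<dots> = yk N \<Delta> (Suc k)"
  proof -
    define s where "s = sin (pi * \<Delta> / 2)"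
    have s0: "s > 0" unfolding s_def using D by (intro sin_gt_zero) auto
    have sb: "sbeta N \<Delta> = 2 * s * sqrt (real N - 1) / N" unfolding sbeta_def s_def ..
    have sq1: "sqrt (real N - 1) > 0" using Nr by simp
    have sqN: "sqrt (real N) > 0" using Nr by simp
    have NN: "sqrt (real N) * (sqrt (real N) * x) = real N * x" for x
      using Nr by (simp add: mult.assoc[symmetric])
    show ?thesis unfolding y_def t_def yk_def tau_def s_def[symmetric] sb af(2)
      using s0 sq1 sqN by (simp add: field_simps NN)
  qed
  finally show ?thesis .
qed

lemma E_step:
  assumes N2: "N \<ge> 2" and D: "0 < \<Delta>" "\<Delta> \<le> 1" and k: "k < KK N \<Delta>"
  shows "EE N (of_real (zk N \<Delta> k)) (xk N \<Delta> k) (of_real (yk N \<Delta> k)) = 1"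
proof -
  note af = aK_facts[OF N2]
  have Nr: "real N \<ge> 2" using N2 by simp
  have A: "EE N (of_real (zk N \<Delta> k)) (xk N \<Delta> k) (of_real (yk N \<Delta> k))
     = of_real ((zk N \<Delta> k)^2 + (tau N \<Delta> k)^2 + (yk N \<Delta> k)^2 - (yk N \<Delta> k)^2 / N)"
    unfolding xk_def by (rule EE_form[OF ph_facts(1)[OF N2 D]]) (use N2 in simp)
  have B: "(zk N \<Delta> k)^2 = (cos (ang N \<Delta> k))^2 - (tau N \<Delta> k)^2"
  proof -
    have "0 \<le> tau N \<Delta> k" "tau N \<Delta> k \<le> cos (ang N \<Delta> k)" using tau_bounds[OF N2 D k] by auto
    hence "(tau N \<Delta> k)^2 \<le> (cos (ang N \<Delta> k))^2" by (intro power_mono) auto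
    thus ?thesis unfolding zk_def by simp
  qed
  have Cc: "(yk N \<Delta> k)^2 - (yk N \<Delta> k)^2 / N = (sin (ang N \<Delta> k))^2"
  proof -
    have sq1: "sqrt (real N - 1) > 0" using Nr by simp
    have sqN: "sqrt (real N) > 0" using Nr by simp
    have e1: "(sqrt (real N - 1))^2 = real N - 1" using Nr by simp
    have e2: "(sqrt (real N))^2 = real N" using Nr by simp
    have n1: "real N - 1 > 0" using Nr by simp
    have "(yk N \<Delta> k)^2 = (sin (ang N \<Delta> k))^2 * real N / (real N - 1)"
      unfolding yk_def af(2) using sq1 sqN by (simp add: power_divide e1 e2 field_simps)
    thus ?thesis using n1 Nr by (simp add: field_simps)
  qed
  have "(zk N \<Delta> k)^2 + (tau N \<Delta> k)^2 + (yk N \<Delta> k)^2 - (yk N \<Delta> k)^2 / N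
     = (cos (ang N \<Delta> k))^2 + ((yk N \<Delta> k)^2 - (yk N \<Delta> k)^2 / N)" using B by simp
  also have "\<dots> = (cos (ang N \<Delta> k))^2 + (sin (ang N \<Delta> k))^2" unfolding Cc ..
  finally show ?thesis unfolding A by simp
qed


lemma ptrace_outer: "ptrace M (outer f) a b = (\<Sum>m\<in>M. f (a, m) * cnj (f (b, m)))"
  unfolding ptrace_def outer_def ..

definition Phf :: "nat \<Rightarrow> nat \<times> nat \<Rightarrow> complex" where
  "Phf N = (\<lambda>(a, m). if a = m then complex_of_real (1 / sqrt N) else 0)"

lemma Phf_sum:
  assumes N: "N \<ge> 1" and a: "a \<in> {1..N}" and b: "b \<in> {1..N}"
  shows "(\<Sum>m\<in>{0..N}. Phf N (a, m) * cnj (Phf N (b, m))) = (if a = b then 1 / of_nat N else 0)"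
proof -
  have "(\<Sum>m\<in>{0..N}. Phf N (a, m) * cnj (Phf N (b, m))) = (\<Sum>m\<in>{0..N}. if m = a then (if a = b then 1 / of_nat N else 0) else 0)"
  proof (rule sum.cong)
    fix m
    have "complex_of_real (1 / sqrt N) * complex_of_real (1 / sqrt N) = 1 / of_nat N"
      using N by (simp flip: of_real_mult)
    thus "Phf N (a, m) * cnj (Phf N (b, m)) = (if m = a then (if a = b then 1 / of_nat N else 0) else 0)"
      unfolding Phf_def by auto
  qed simp
  also have "\<dots> = (if a = b then 1 / of_nat N else 0)" using a by simp
  finally show ?thesis .
qed

definition Phk :: "nat \<Rightarrow> real \<Rightarrow> nat \<Rightarrow> nat \<times> nat \<Rightarrow> complex" where
  "Phk N \<Delta> k = (\<lambda>(a, m). vf N (of_real (zk N \<Delta> k)) (xk N \<Delta> k) (of_real (yk N \<Delta> k)) m a)"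

lemma Phk_ptrace:
  assumes N2: "N \<ge> 2" and D: "0 < \<Delta>" "\<Delta> \<le> 1" and k: "k < KK N \<Delta>" and a: "a \<in> {1..N}" and b: "b \<in> {1..N}"
  shows "ptrace {0..N} (outer (Phk N \<Delta> k)) a b
    = (1 - of_real ((yk N \<Delta> k)^2) + (if a = b then of_real ((yk N \<Delta> k)^2) else 0)) / of_nat N"
proof -
  have "ptrace {0..N} (outer (Phk N \<Delta> k)) a b
    = (EE N (of_real (zk N \<Delta> k)) (xk N \<Delta> k) (of_real (yk N \<Delta> k)) - of_real (yk N \<Delta> k) * cnj (of_real (yk N \<Delta> k))
       + (if a = b then of_real (yk N \<Delta> k) * cnj (of_real (yk N \<Delta> k)) else 0)) / of_nat N"
    unfolding ptrace_outer Phk_def using famsum[where N=N and a=a and b=b] N2 a b by simp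
  thus ?thesis unfolding E_step[OF N2 D k] by (simp add: power2_eq_square)
qed

lemma Phk_evolve:
  assumes N2: "N \<ge> 2" and D: "0 < \<Delta>" "\<Delta> \<le> 1" and k: "k < KK N \<Delta>" and a: "a \<in> {1..N}" and b: "b \<in> {1..N}"
  shows "ptrace {0..N} (conj_by ({1..N} \<times> {0..N}) (grover_oracle N \<Delta>) (outer (Phk N \<Delta> k))) a b
    = (1 - of_real ((yk N \<Delta> (Suc k))^2) + (if a = b then of_real ((yk N \<Delta> (Suc k))^2) else 0)) / of_nat N"
proof -
  define z where "z = complex_of_real (zk N \<Delta> k)"
  define x where "x = xk N \<Delta> k"
  define y where "y = complex_of_real (yk N \<Delta> k)"
  define y' where "y' = lamD \<Delta> * y + (lamD \<Delta> - 1) * x / sqrt N"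
  have lam: "lamD \<Delta> * cnj (lamD \<Delta>) = 1" using complex_norm_square[of "lamD \<Delta>"] lamD_cmod[of \<Delta>] by simp
  have N1: "N \<ge> 1" using N2 by simp
  have EE1: "EE N z x y' = 1" unfolding y'_def EE_inv[OF lam N1] using E_step[OF N2 D k]
    unfolding z_def x_def y_def by simp
  have yy: "y' * cnj y' = of_real ((yk N \<Delta> (Suc k))^2)"
    unfolding mult_cnj_cmod y'_def y_def x_def y_step[OF N2 D k] by (simp add: power2_eq_square)
  have "ptrace {0..N} (conj_by ({1..N} \<times> {0..N}) (grover_oracle N \<Delta>) (outer (Phk N \<Delta> k))) a b
     = (\<Sum>m\<in>{0..N}. vf N z x y' m a * cnj (vf N z x y' m b))"
    unfolding ptrace_conj[OF a b]
  proof (rule sum.cong)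
    fix m assume m: "m \<in> {0..N}"
    show "gg \<Delta> m a * outer (Phk N \<Delta> k) (a, m) (b, m) * cnj (gg \<Delta> m b) = vf N z x y' m a * cnj (vf N z x y' m b)"
    proof -
      have e1: "vf N z x y' m a = gg \<Delta> m a * vf N z x y m a" unfolding y'_def using gg_vf[OF a, of \<Delta> m z x y] by simp
      have e2: "vf N z x y' m b = gg \<Delta> m b * vf N z x y m b" unfolding y'_def using gg_vf[OF b, of \<Delta> m z x y] by simp
      show ?thesis unfolding outer_def Phk_def z_def[symmetric] x_def[symmetric] y_def[symmetric] e1 e2
        by (simp add: mult_ac)
    qed
  qed simp
  also have "\<dots> = (EE N z x y' - y' * cnj y' + (if a = b then y' * cnj y' else 0)) / of_nat N"
    using famsum[where N=N and a=a and b=b] N2 a b by simp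
  finally show ?thesis unfolding EE1 yy .
qed

lemma exists_protocol:
  assumes N2: "N \<ge> 2" and D: "0 < \<Delta>" "\<Delta> \<le> 1"
  shows "\<exists>\<rho> \<rho>t \<rho>'. grover_protocol N \<Delta> (KK N \<Delta>) 1 \<rho> \<rho>t \<rho>'"
proof -
  define K where "K = KK N \<Delta>"
  define \<rho>t where "\<rho>t = (\<lambda>k. if k < K then outer (Phk N \<Delta> k) else outer (Phf N))"
  define \<rho>' where "\<rho>' = outer (Phf N)"
  define \<rho> where "\<rho> = (\<lambda>k. ptrace {0..N} (\<rho>t k))"
  have K1: "K \<ge> 1" unfolding K_def by (rule KK_facts(1)[OF N2 D])
  have Nr: "real N \<ge> 2" using N2 by simp
  have N1: "N \<ge> 1" using N2 by simp
  have psdt: "psd_on ({1..N} \<times> {0..N}) (\<rho>t k)" for k unfolding \<rho>t_def by (simp add: psd_outer)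
  have gen: "\<rho> k a b = (1 - of_real ((yk N \<Delta> k)^2) + (if a = b then of_real ((yk N \<Delta> k)^2) else 0)) / of_nat N"
    if k: "k \<le> K" and a: "a \<in> {1..N}" and b: "b \<in> {1..N}" for k a b
  proof (cases "k < K")
    case True
    thus ?thesis unfolding \<rho>_def \<rho>t_def using Phk_ptrace[OF N2 D _ a b, of k] K_def by simp
  next
    case False
    hence kK: "k = K" using k by simp
    have "\<rho> k a b = (if a = b then 1 / of_nat N else 0)"
      unfolding \<rho>_def \<rho>t_def using False Phf_sum[OF N1 a b] by (simp add: ptrace_outer)
    thus ?thesis unfolding kK K_def yk_KK[OF N2 D] by simp
  qed
  have "is_protocol {1..N} {0..N} {0..N} (grover_psi0 N) (grover_oracle N \<Delta>)
       (grover_Pi N ` {1..N}) K 1 \<rho> \<rho>t \<rho>'"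
    unfolding is_protocol_def
  proof (intro conjI allI impI ballI)
    fix k assume "k \<le> K"
    show "psd_on {1..N} (\<rho> k)" unfolding \<rho>_def by (rule psd_ptrace[OF psdt]) auto
    show "psd_on ({1..N} \<times> {0..N}) (\<rho>t k)" by (rule psdt)
  next
    show "psd_on ({1..N} \<times> {0..N}) \<rho>'" unfolding \<rho>'_def by (rule psd_outer)
  next
    fix a b assume a: "a \<in> {1..N}" and b: "b \<in> {1..N}"
    have "\<rho> 0 a b = 1 / of_nat N" using gen[OF _ a b, of 0] yk_0[OF N2] by simp
    also have "\<dots> = grover_psi0 N a * cnj (grover_psi0 N b)"
      unfolding grover_psi0_def using Nr by (simp flip: of_real_mult)
    finally show "\<rho> 0 a b = grover_psi0 N a * cnj (grover_psi0 N b)" .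
  next
    fix k a b assume "k \<le> K" "a \<in> {1..N}" "b \<in> {1..N}"
    show "ptrace {0..N} (\<rho>t k) a b = \<rho> k a b" unfolding \<rho>_def ..
  next
    fix k a b assume k: "k < K" and a: "a \<in> {1..N}" and b: "b \<in> {1..N}"
    have "ptrace {0..N} (conj_by ({1..N} \<times> {0..N}) (grover_oracle N \<Delta>) (\<rho>t k)) a b
      = (1 - of_real ((yk N \<Delta> (Suc k))^2) + (if a = b then of_real ((yk N \<Delta> (Suc k))^2) else 0)) / of_nat N"
      unfolding \<rho>t_def using k Phk_evolve[OF N2 D _ a b, of k] K_def by simp
    also have "\<dots> = \<rho> (Suc k) a b" using gen[OF _ a b, of "Suc k"] k by simp
    finally show "ptrace {0..N} (conj_by ({1..N} \<times> {0..N}) (grover_oracle N \<Delta>) (\<rho>t k)) a b = \<rho> (Suc k) a b" .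
  next
    fix a b assume "a \<in> {1..N}" "b \<in> {1..N}"
    show "ptrace {0..N} \<rho>' a b = \<rho> K a b" unfolding \<rho>_def \<rho>t_def \<rho>'_def by simp
  next
    fix P assume "P \<in> grover_Pi N ` {1..N}"
    then obtain j where j: "j \<in> {1..N}" and P: "P = grover_Pi N j" by auto
    have "op_trace ({1..N} \<times> {0..N}) (op_comp ({1..N} \<times> {0..N}) P \<rho>') = of_nat N * \<rho>' (j, j) (j, j)"
      unfolding P by (rule op_trace_Pi[OF j])
    also have "\<rho>' (j, j) (j, j) = 1 / of_nat N"
      unfolding \<rho>'_def outer_def Phf_def using Nr by (simp flip: of_real_mult)
    finally show "1 \<le> Re (op_trace ({1..N} \<times> {0..N}) (op_comp ({1..N} \<times> {0..N}) P \<rho>'))"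
      using Nr by simp
  qed
  thus ?thesis unfolding grover_protocol_def K_def by blast
qed

theorem mainTheorem3:
  fixes N :: nat and \<Delta> :: real
  assumes "N > 1" and "0 < \<Delta>" and "\<Delta> \<le> 1"
  defines "Tmin \<equiv> \<Delta> * of_int \<lceil>arccos (1 / sqrt (real N))
                 / arcsin (2 * sin (pi * \<Delta> / 2) * sqrt (real N - 1) / real N)\<rceil>"
  shows "(\<exists>K \<rho> \<rho>t \<rho>'. Tmin = real K * \<Delta> \<and> grover_protocol N \<Delta> K 1 \<rho> \<rho>t \<rho>') \<and>
         (\<forall>K \<rho> \<rho>t \<rho>'. grover_protocol N \<Delta> K 1 \<rho> \<rho>t \<rho>' \<longrightarrow> Tmin \<le> real K * \<Delta>)"
proof -
  have N2: "N \<ge> 2" using assms(1) by simp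
  have D: "0 < \<Delta>" "\<Delta> \<le> 1" using assms(2,3) by auto
  have T: "Tmin = \<Delta> * of_int \<lceil>aK N / bet N \<Delta>\<rceil>" unfolding Tmin_def aK_def bet_def sbeta_def ..
  show ?thesis
  proof
    obtain \<rho> \<rho>t \<rho>' where p: "grover_protocol N \<Delta> (KK N \<Delta>) 1 \<rho> \<rho>t \<rho>'"
      using exists_protocol[OF N2 D] by blast
    have "Tmin = real (KK N \<Delta>) * \<Delta>" unfolding T KK_facts(4)[OF N2 D] by simp
    thus "\<exists>K \<rho> \<rho>t \<rho>'. Tmin = real K * \<Delta> \<and> grover_protocol N \<Delta> K 1 \<rho> \<rho>t \<rho>'" using p by blast
  next
    show "\<forall>K \<rho> \<rho>t \<rho>'. grover_protocol N \<Delta> K 1 \<rho> \<rho>t \<rho>' \<longrightarrow> Tmin \<le> real K * \<Delta>"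
    proof (intro allI impI)
      fix K \<rho> \<rho>t \<rho>' assume p: "grover_protocol N \<Delta> K 1 \<rho> \<rho>t \<rho>'"
      have "aK N \<le> real K * bet N \<Delta>" using lower_bound[OF N2 D p] unfolding aK_def bet_def .
      moreover have "bet N \<Delta> > 0" using beta_facts(1)[OF N2 D] unfolding bet_def .
      ultimately have "aK N / bet N \<Delta> \<le> real K" by (simp add: field_simps)
      hence "\<lceil>aK N / bet N \<Delta>\<rceil> \<le> int K" by (simp add: ceiling_le_iff)
      hence "of_int \<lceil>aK N / bet N \<Delta>\<rceil> \<le> real K" by linarith
      thus "Tmin \<le> real K * \<Delta>" unfolding T using D by (simp add: mult.commute mult_left_mono)
    qed
  qed
qed


end
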